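(* Let $\{\xi_{n,i}\}_{n,i\ge 1}$ and $\{\eta_n\}_{n\ge1}$ be two independent i.i.d. families of nonnegative integer-valued random variables with generic copies $\xi$ and $\eta$, where $P(\eta=0)<1$, and define $X_0=0$, $X_n=\sum_{i=1}^{X_{n-1}}\xi_{n,i}+\eta_n$ for $n\ge1$, and $S_n=X_1+\cdots+X_n$. Let $\alpha=E\xi$. Assume $0<\alpha<1$; $P(\eta>x)=x^{-\kappa}L(x)$ for some $\kappa>0$ and slowly varying $L$; and, if $\kappa\ge1$, that $E(\xi^{\kappa+\delta})<\infty$ for some $\delta>0$. Then for every $n\ge1$, $$\lim_{x\to\infty}\frac{P(S_n>x)}{P(\eta>x)}=\sum_{i=1}^{n}\Big(\sum_{m=0}^{i-1}\alpha^m\Big)^{\kappa}.$$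
   Context: A function $L$ is slowly varying if $L(tx)/L(x)\to1$ as $x\to\infty$ for all $t>0$. *)

theory Defs
  imports "HOL-Probability.Probability"
begin

definition slowly_varying :: "(real \<Rightarrow> real) \<Rightarrow> bool" where
  "slowly_varying L \<longleftrightarrow> (\<forall>t>0. ((\<lambda>x. L (t * x) / L x) \<longlongrightarrow> 1) at_top)"

fun bpi :: "(nat \<Rightarrow> nat \<Rightarrow> 'a \<Rightarrow> nat) \<Rightarrow> (nat \<Rightarrow> 'a \<Rightarrow> nat) \<Rightarrow> nat \<Rightarrow> 'a \<Rightarrow> nat" where
  "bpi \<xi> \<eta> 0 \<omega> = 0"
| "bpi \<xi> \<eta> (Suc n) \<omega> = (\<Sum>i=1..bpi \<xi> \<eta> n \<omega>. \<xi> (Suc n) i \<omega>) + \<eta> (Suc n) \<omega>"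

definition bpi_sum :: "(nat \<Rightarrow> nat \<Rightarrow> 'a \<Rightarrow> nat) \<Rightarrow> (nat \<Rightarrow> 'a \<Rightarrow> nat) \<Rightarrow> nat \<Rightarrow> 'a \<Rightarrow> nat" where
  "bpi_sum \<xi> \<eta> n \<omega> = (\<Sum>k=1..n. bpi \<xi> \<eta> k \<omega>)"

end

theory Submission
  imports Defs
begin


lemma dyadic_induct:
  fixes y0 :: real
  assumes y0: "y0 > 0"
    and base: "\<And>y. y0 \<le> y \<Longrightarrow> y < 2*y0 \<Longrightarrow> P y"
    and step: "\<And>y. 2*y0 \<le> y \<Longrightarrow> P (y/2) \<Longrightarrow> P y"
    and y: "y0 \<le> y"
  shows "P y"
proof -
  have *: "\<forall>y. y0 \<le> y \<and> y < y0 * 2^(Suc j) \<longrightarrow> P y" for j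
  proof (induction j)
    case 0 then show ?case using base by (auto simp: mult.commute)
  next
    case (Suc j)
    show ?case
    proof (intro allI impI)
      fix y assume h: "y0 \<le> y \<and> y < y0 * 2 ^ Suc (Suc j)"
      show "P y"
      proof (cases "y < 2*y0")
        case True then show ?thesis using base h by auto
      next
        case False
        then have "P (y/2)" using Suc h by auto
        then show ?thesis using step False by auto
      qed
    qed
  qed
  obtain j where "y / y0 < 2 ^ j" using real_arch_pow[of 2 "y/y0"] by auto
  then have "y < y0 * 2 ^ j" using y0 by (simp add: field_simps)
  moreover have "y0 * 2^j \<le> y0 * 2 ^ Suc j" using y0 by (intro mult_left_mono) auto
  ultimately have "y < y0 * 2 ^ Suc j" by linarith
  then show ?thesis using * y by blast
qed

lemma sandwich:
  fixes h u d :: "real \<Rightarrow> real"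
  assumes bounds: "\<And>\<epsilon>. 0 < \<epsilon> \<Longrightarrow> \<epsilon> < 1/2 \<Longrightarrow> \<exists>U D. (U \<longlongrightarrow> u \<epsilon>) at_top \<and> (D \<longlongrightarrow> d \<epsilon>) at_top
            \<and> eventually (\<lambda>x. D x \<le> h x \<and> h x \<le> U x) at_top"
    and lu: "(u \<longlongrightarrow> A) (at_right 0)" and ld: "(d \<longlongrightarrow> A) (at_right 0)"
  shows "(h \<longlongrightarrow> A) at_top"
proof (rule tendstoI)
  fix e :: real assume e: "e > 0"
  have "eventually (\<lambda>\<epsilon>. dist (u \<epsilon>) A < e/2 \<and> dist (d \<epsilon>) A < e/2 \<and> \<epsilon> < 1/2) (at_right (0::real))"
  proof -
    have e1: "eventually (\<lambda>\<epsilon>. \<epsilon> < 1/2) (at_right (0::real))"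
      unfolding eventually_at_right_field by (intro exI[of _ "1/2"]) auto
    show ?thesis using tendstoD[OF lu, of "e/2"] tendstoD[OF ld, of "e/2"] e e1
      by (auto simp: eventually_conj_iff)
  qed
  then obtain \<epsilon> where ep: "\<epsilon> > 0" "\<epsilon> < 1/2" "dist (u \<epsilon>) A < e/2" "dist (d \<epsilon>) A < e/2"
  proof -
    from \<open>eventually _ (at_right 0)\<close> obtain b where "b > 0" and b: "\<forall>y>0. y < b \<longrightarrow> dist (u y) A < e/2 \<and> dist (d y) A < e/2 \<and> y < 1/2"
      unfolding eventually_at_right_field by auto
    have "dist (u (b/2)) A < e/2 \<and> dist (d (b/2)) A < e/2 \<and> b/2 < 1/2" using b[rule_format, of "b/2"] \<open>b>0\<close> by auto
    then show ?thesis using \<open>b>0\<close> by (intro that[of "b/2"]) auto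
  qed
  have "eventually (\<lambda>x. U x < u \<epsilon> + e/2 \<and> D x > d \<epsilon> - e/2 \<and> D x \<le> h x \<and> h x \<le> U x) at_top"
    if "(U \<longlongrightarrow> u \<epsilon>) at_top" "(D \<longlongrightarrow> d \<epsilon>) at_top" "eventually (\<lambda>x. D x \<le> h x \<and> h x \<le> U x) at_top" for U D
  proof -
    have "eventually (\<lambda>x. dist (U x) (u \<epsilon>) < e/2) at_top" "eventually (\<lambda>x. dist (D x) (d \<epsilon>) < e/2) at_top"
      using tendstoD[OF that(1), of "e/2"] tendstoD[OF that(2), of "e/2"] e by auto
    then show ?thesis using that(3) by eventually_elim (unfold dist_real_def abs_less_iff, linarith)
  qed
  then obtain U D where "eventually (\<lambda>x. U x < u \<epsilon> + e/2 \<and> D x > d \<epsilon> - e/2 \<and> D x \<le> h x \<and> h x \<le> U x) at_top"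
    using bounds[OF ep(1,2)] by blast
  then show "eventually (\<lambda>x. dist (h x) A < e) at_top"
    by eventually_elim (insert ep, unfold dist_real_def abs_less_iff, linarith)
qed


lemma (in prob_space) prob_gt_tendsto_0:
  fixes V :: "'a \<Rightarrow> real"
  assumes [measurable]: "V \<in> borel_measurable M"
  shows "((\<lambda>x. prob {\<omega>\<in>space M. V \<omega> > x}) \<longlongrightarrow> 0) at_top"
proof -
  let ?A = "\<lambda>n::nat. {\<omega>\<in>space M. V \<omega> > real n}"
  have "(\<lambda>n. prob (?A n)) \<longlonglongrightarrow> prob (\<Inter>n. ?A n)"
    by (rule finite_Lim_measure_decseq) (auto simp: decseq_def)
  moreover have "(\<Inter>n. ?A n) = {}"
  proof -
    { fix \<omega> assume "\<omega> \<in> (\<Inter>n. ?A n)"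
      moreover obtain n where "V \<omega> < real n" using reals_Archimedean2 by blast
      ultimately have False by (metis (no_types, lifting) INT_E less_asym mem_Collect_eq UNIV_I) }
    then show ?thesis by blast
  qed
  ultimately have lim: "(\<lambda>n. prob (?A n)) \<longlonglongrightarrow> 0" by simp
  show ?thesis
  proof (rule tendstoI)
    fix e :: real assume "e > 0"
    then obtain N where N: "prob (?A N) < e"
      using lim[THEN tendstoD, of e] by (auto simp: eventually_sequentially dist_real_def)
    have "eventually (\<lambda>x. x \<ge> real N) at_top" by (rule eventually_ge_at_top)
    then show "eventually (\<lambda>x. dist (prob {\<omega>\<in>space M. V \<omega> > x}) 0 < e) at_top"
    proof eventually_elim
      case (elim x)
      have "prob {\<omega>\<in>space M. V \<omega> > x} \<le> prob (?A N)"
        using elim by (intro finite_measure_mono) auto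
      then show ?case using N by (simp add: dist_real_def)
    qed
  qed
qed

definition Jset :: "(nat \<times> nat + nat) set" where
  "Jset = {Inl (n, i) | n i. n \<ge> 1 \<and> i \<ge> 1} \<union> {Inr n | n. n \<ge> 1}"

definition Xall :: "(nat \<Rightarrow> nat \<Rightarrow> 'a \<Rightarrow> nat) \<Rightarrow> (nat \<Rightarrow> 'a \<Rightarrow> nat) \<Rightarrow> nat \<times> nat + nat \<Rightarrow> 'a \<Rightarrow> nat" where
  "Xall \<xi> \<eta> j = (case j of Inl (n, i) \<Rightarrow> \<xi> n i | Inr n \<Rightarrow> \<eta> n)"

locale bpi_ctx = prob_space M for M :: "'a measure" +
  fixes \<xi> :: "nat \<Rightarrow> nat \<Rightarrow> 'a \<Rightarrow> nat" and \<eta> :: "nat \<Rightarrow> 'a \<Rightarrow> nat" and \<kappa> p :: real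
  assumes indep: "indep_vars (\<lambda>_. count_space UNIV) (Xall \<xi> \<eta>) Jset"
    and xi_id: "\<And>n i. n \<ge> 1 \<Longrightarrow> i \<ge> 1 \<Longrightarrow>
          distr M (count_space UNIV) (\<xi> n i) = distr M (count_space UNIV) (\<xi> 1 1)"
    and eta_id: "\<And>n. n \<ge> 1 \<Longrightarrow>
          distr M (count_space UNIV) (\<eta> n) = distr M (count_space UNIV) (\<eta> 1)"
    and kappa_pos: "\<kappa> > 0"
    and tail: "\<exists>L. slowly_varying L \<and>
          (\<forall>x>0. prob {\<omega> \<in> space M. real (\<eta> 1 \<omega>) > x} = x powr (-\<kappa>) * L x)"
    and p1: "1 \<le> p" and pk: "\<kappa> < p"
    and mom: "integrable M (\<lambda>\<omega>. real (\<xi> 1 1 \<omega>) powr p)"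
    and int_xi: "integrable M (\<lambda>\<omega>. real (\<xi> 1 1 \<omega>))"
begin

definition T :: "real \<Rightarrow> real" where
  "T x = prob {\<omega> \<in> space M. real (\<eta> 1 \<omega>) > x}"

definition RL :: "(real \<Rightarrow> real) \<Rightarrow> real \<Rightarrow> bool" where
  "RL f a \<longleftrightarrow> ((\<lambda>x. f x / T x) \<longlongrightarrow> a) at_top"

lemma meas_xi[measurable]: "n \<ge> 1 \<Longrightarrow> i \<ge> 1 \<Longrightarrow> \<xi> n i \<in> measurable M (count_space UNIV)"
proof -
  assume "n \<ge> 1" "i \<ge> 1"
  then have "Inl (n,i) \<in> Jset" by (auto simp: Jset_def)
  then have "random_variable (count_space UNIV) (Xall \<xi> \<eta> (Inl (n,i)))"
    using indep unfolding indep_vars_def by blast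
  then show ?thesis by (simp add: Xall_def)
qed

lemma meas_eta[measurable]: "n \<ge> 1 \<Longrightarrow> \<eta> n \<in> measurable M (count_space UNIV)"
proof -
  assume "n \<ge> 1"
  then have "Inr n \<in> Jset" by (auto simp: Jset_def)
  then have "random_variable (count_space UNIV) (Xall \<xi> \<eta> (Inr n))"
    using indep unfolding indep_vars_def by blast
  then show ?thesis by (simp add: Xall_def)
qed

lemma meas_eta1[measurable]: "\<eta> 1 \<in> measurable M (count_space UNIV)"
  by (rule meas_eta) simp

lemma T_nonneg: "T x \<ge> 0" unfolding T_def by simp

lemma T_mono: "x \<le> y \<Longrightarrow> T y \<le> T x"
  unfolding T_def by (intro finite_measure_mono) auto

lemma T_lim0: "(T \<longlongrightarrow> 0) at_top"
  unfolding T_def by (rule prob_gt_tendsto_0) simp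

lemma T_rv: assumes "c > 0" shows "((\<lambda>x. T (c*x) / T x) \<longlongrightarrow> c powr -\<kappa>) at_top"
proof -
  obtain L where L: "slowly_varying L" "\<And>x. x > 0 \<Longrightarrow> T x = x powr (-\<kappa>) * L x"
    using tail unfolding T_def by blast
  have "((\<lambda>x. c powr -\<kappa> * (L (c*x) / L x)) \<longlongrightarrow> c powr -\<kappa>) at_top"
    using L(1) assms unfolding slowly_varying_def using tendsto_mult[OF tendsto_const, of "\<lambda>x. L (c*x) / L x" 1 at_top "c powr -\<kappa>"] by auto
  moreover have "eventually (\<lambda>x. c powr -\<kappa> * (L (c*x) / L x) = T (c*x) / T x) at_top"
    using eventually_gt_at_top[of 0]
  proof eventually_elim
    case (elim x)
    then have "T (c*x) = c powr -\<kappa> * x powr -\<kappa> * L (c*x)" "T x = x powr -\<kappa> * L x"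
      using L(2)[of "c*x"] L(2)[of x] assms by (auto simp: powr_mult)
    then show ?case using elim by (simp add: field_simps)
  qed
  ultimately show ?thesis by (rule Lim_transform_eventually)
qed

lemma T_pos: "eventually (\<lambda>x. T x > 0) at_top"
proof -
  obtain L where L: "slowly_varying L" "\<And>x. x > 0 \<Longrightarrow> T x = x powr (-\<kappa>) * L x"
    using tail unfolding T_def by blast
  have "((\<lambda>x. L (1*x) / L x) \<longlongrightarrow> 1) at_top"
    using L(1) unfolding slowly_varying_def by (meson zero_less_one)
  then have "eventually (\<lambda>x. L (1*x) / L x > 1/2) at_top"
    by (rule order_tendstoD) simp
  then show ?thesis using eventually_gt_at_top[of 0]
  proof eventually_elim
    case (elim x)
    then have "L x \<noteq> 0" by auto
    then have "T x \<noteq> 0" using L(2)[of x] elim by simp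
    then show ?case using T_nonneg[of x] by linarith
  qed
qed

lemma RL_scale:
  assumes "RL F a" "c > 0"
  shows "((\<lambda>x. F (c*x) / T x) \<longlongrightarrow> a * c powr -\<kappa>) at_top"
proof -
  have fl: "filterlim (\<lambda>x. c * x) at_top at_top"
    using assms(2) by (intro filterlim_tendsto_pos_mult_at_top[OF tendsto_const _ filterlim_ident])
  have "((\<lambda>x. F (c*x) / T (c*x)) \<longlongrightarrow> a) at_top"
    using filterlim_compose[OF assms(1)[unfolded RL_def] fl] by (simp add: o_def)
  then have "((\<lambda>x. F (c*x) / T (c*x) * (T (c*x) / T x)) \<longlongrightarrow> a * c powr -\<kappa>) at_top"
    by (intro tendsto_mult T_rv assms)
  moreover have "eventually (\<lambda>x. T (c*x) > 0) at_top"
    using fl T_pos by (rule filterlim_iff[THEN iffD1, rule_format, of _ at_top]) 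
  then have "eventually (\<lambda>x. F (c*x) / T (c*x) * (T (c*x) / T x) = F (c*x) / T x) at_top"
    by eventually_elim simp
  ultimately show ?thesis by (rule Lim_transform_eventually)
qed

end


context prob_space begin
lemma prob_le_2: "A \<subseteq> B \<union> C \<Longrightarrow> B \<in> events \<Longrightarrow> C \<in> events \<Longrightarrow> prob A \<le> prob B + prob C"
  by (meson finite_measure_mono measure_Un_le order_trans sets.Un)

lemma indep_prob:
  fixes V W :: "'a \<Rightarrow> real"
  assumes "indep_var borel V borel W" "A \<in> sets borel" "B \<in> sets borel"
  shows "prob {\<omega>\<in>space M. V \<omega> \<in> A \<and> W \<omega> \<in> B} = prob {\<omega>\<in>space M. V \<omega> \<in> A} * prob {\<omega>\<in>space M. W \<omega> \<in> B}"
proof -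
  have "prob ((\<lambda>x. (V x, W x)) -` (A \<times> B) \<inter> space M) = prob (V -` A \<inter> space M) * prob (W -` B \<inter> space M)"
    by (rule indep_varD[OF assms])
  moreover have "(\<lambda>x. (V x, W x)) -` (A \<times> B) \<inter> space M = {\<omega>\<in>space M. V \<omega> \<in> A \<and> W \<omega> \<in> B}"
    "V -` A \<inter> space M = {\<omega>\<in>space M. V \<omega> \<in> A}" "W -` B \<inter> space M = {\<omega>\<in>space M. W \<omega> \<in> B}" by auto
  ultimately show ?thesis by simp
qed
end

context bpi_ctx begin

lemma powr_right_lim: "((\<lambda>\<epsilon>. a * (1 + s * \<epsilon>) powr -\<kappa>) \<longlongrightarrow> a) (at_right 0)"
proof -
  have "((\<lambda>\<epsilon>. a * (1 + s * \<epsilon>) powr -\<kappa>) \<longlongrightarrow> a * (1 + s * 0) powr -\<kappa>) (at_right 0)"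
    by (intro tendsto_intros) auto
  then show ?thesis by simp
qed

lemma RL_perturb:
  fixes Y E :: "'a \<Rightarrow> real"
  assumes [measurable]: "Y \<in> borel_measurable M" "E \<in> borel_measurable M"
    and RY: "RL (\<lambda>x. prob {\<omega>\<in>space M. Y \<omega> > x}) a"
    and RE: "\<And>\<epsilon>. \<epsilon> > 0 \<Longrightarrow> RL (\<lambda>x. prob {\<omega>\<in>space M. \<bar>E \<omega>\<bar> > \<epsilon> * x}) 0"
  shows "RL (\<lambda>x. prob {\<omega>\<in>space M. Y \<omega> + E \<omega> > x}) a"
  unfolding RL_def
proof (rule sandwich[where u = "\<lambda>\<epsilon>. a * (1 + (-1) * \<epsilon>) powr -\<kappa>" and d = "\<lambda>\<epsilon>. a * (1 + 1 * \<epsilon>) powr -\<kappa>"])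
  fix \<epsilon> :: real assume e: "0 < \<epsilon>" "\<epsilon> < 1/2"
  let ?PY = "\<lambda>x. prob {\<omega>\<in>space M. Y \<omega> > x}"
  let ?PE = "\<lambda>x. prob {\<omega>\<in>space M. \<bar>E \<omega>\<bar> > \<epsilon> * x}"
  define U where "U x = ?PY ((1 - \<epsilon>) * x) / T x + ?PE x / T x" for x
  define D where "D x = ?PY ((1 + \<epsilon>) * x) / T x - ?PE x / T x" for x
  have "(U \<longlongrightarrow> a * (1 - \<epsilon>) powr -\<kappa> + 0) at_top"
    unfolding U_def using RE[OF e(1)] e unfolding RL_def
    by (intro tendsto_add RL_scale RY) auto
  moreover have "(D \<longlongrightarrow> a * (1 + \<epsilon>) powr -\<kappa> - 0) at_top"
    unfolding D_def using RE[OF e(1)] e unfolding RL_def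
    by (intro tendsto_diff RL_scale RY) auto
  moreover have "eventually (\<lambda>x. D x \<le> prob {\<omega>\<in>space M. Y \<omega> + E \<omega> > x} / T x \<and>
      prob {\<omega>\<in>space M. Y \<omega> + E \<omega> > x} / T x \<le> U x) at_top"
    using T_pos eventually_gt_at_top[of 0]
  proof eventually_elim
    case (elim x)
    have "prob {\<omega>\<in>space M. Y \<omega> + E \<omega> > x} \<le> ?PY ((1 - \<epsilon>) * x) + ?PE x"
      by (rule prob_le_2) (auto simp: algebra_simps)
    moreover have "?PY ((1 + \<epsilon>) * x) \<le> prob {\<omega>\<in>space M. Y \<omega> + E \<omega> > x} + ?PE x"
      by (rule prob_le_2) (auto simp: algebra_simps)
    ultimately show ?case using elim unfolding U_def D_def
      by (simp add: diff_divide_distrib[symmetric] add_divide_distrib[symmetric] divide_right_mono)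
  qed
  ultimately show "\<exists>U D. (U \<longlongrightarrow> a * (1 + (-1) * \<epsilon>) powr -\<kappa>) at_top \<and> (D \<longlongrightarrow> a * (1 + 1 * \<epsilon>) powr -\<kappa>) at_top \<and>
      eventually (\<lambda>x. D x \<le> prob {\<omega>\<in>space M. Y \<omega> + E \<omega> > x} / T x \<and>
      prob {\<omega>\<in>space M. Y \<omega> + E \<omega> > x} / T x \<le> U x) at_top"
    by auto
qed (rule powr_right_lim)+

lemma RL_indep_sum:
  fixes V W :: "'a \<Rightarrow> real"
  assumes [measurable]: "V \<in> borel_measurable M" "W \<in> borel_measurable M"
    and ind: "indep_var borel V borel W"
    and nn: "\<And>\<omega>. V \<omega> \<ge> 0" "\<And>\<omega>. W \<omega> \<ge> 0"
    and RV: "RL (\<lambda>x. prob {\<omega>\<in>space M. V \<omega> > x}) a"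
    and RW: "RL (\<lambda>x. prob {\<omega>\<in>space M. W \<omega> > x}) b"
  shows "RL (\<lambda>x. prob {\<omega>\<in>space M. V \<omega> + W \<omega> > x}) (a + b)"
  unfolding RL_def
proof (rule sandwich[where u = "\<lambda>\<epsilon>. a * (1 + (-1) * \<epsilon>) powr -\<kappa> + b * (1 + (-1) * \<epsilon>) powr -\<kappa>" and d = "\<lambda>\<epsilon>. a + b"])
  fix \<epsilon> :: real assume e: "0 < \<epsilon>" "\<epsilon> < 1/2"
  let ?PV = "\<lambda>x. prob {\<omega>\<in>space M. V \<omega> > x}"
  let ?PW = "\<lambda>x. prob {\<omega>\<in>space M. W \<omega> > x}"
  define U where "U x = ?PV ((1 - \<epsilon>) * x) / T x + ?PW ((1 - \<epsilon>) * x) / T x + ?PV (\<epsilon> * x) / T x * ?PW (\<epsilon> * x)" for x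
  define D where "D x = ?PV x / T x + ?PW x / T x - ?PV x / T x * ?PW x" for x
  have fl: "filterlim (\<lambda>x. \<epsilon> * x) at_top at_top"
    using e by (intro filterlim_tendsto_pos_mult_at_top[OF tendsto_const _ filterlim_ident])
  have W0: "((\<lambda>x. ?PW (\<epsilon> * x)) \<longlongrightarrow> 0) at_top"
    using filterlim_compose[OF prob_gt_tendsto_0[of W] fl] by (simp add: o_def)
  have "(U \<longlongrightarrow> a * (1 - \<epsilon>) powr -\<kappa> + b * (1 - \<epsilon>) powr -\<kappa> + (a * \<epsilon> powr -\<kappa>) * 0) at_top"
    unfolding U_def using e
    by (intro tendsto_add tendsto_mult RL_scale RV RW W0) auto
  moreover have "(D \<longlongrightarrow> a + b - a * 0) at_top"
    unfolding D_def using RV RW unfolding RL_def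
    by (intro tendsto_diff tendsto_add tendsto_mult prob_gt_tendsto_0) auto
  moreover have "eventually (\<lambda>x. D x \<le> prob {\<omega>\<in>space M. V \<omega> + W \<omega> > x} / T x \<and>
      prob {\<omega>\<in>space M. V \<omega> + W \<omega> > x} / T x \<le> U x) at_top"
    using T_pos eventually_gt_at_top[of 0]
  proof eventually_elim
    case (elim x)
    have pe: "prob {\<omega>\<in>space M. V \<omega> \<in> {s<..} \<and> W \<omega> \<in> {t<..}} = ?PV s * ?PW t" for s t
      using indep_prob[OF ind, of "{s<..}" "{t<..}"] by simp
    have "prob {\<omega>\<in>space M. V \<omega> + W \<omega> > x} \<le> prob ({\<omega>\<in>space M. V \<omega> > (1 - \<epsilon>) * x} \<union> {\<omega>\<in>space M. W \<omega> > (1 - \<epsilon>) * x})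
        + prob {\<omega>\<in>space M. V \<omega> \<in> {\<epsilon> * x<..} \<and> W \<omega> \<in> {\<epsilon> * x<..}}"
      by (rule prob_le_2) (auto simp: algebra_simps)
    also have "\<dots> \<le> ?PV ((1 - \<epsilon>) * x) + ?PW ((1 - \<epsilon>) * x) + ?PV (\<epsilon> * x) * ?PW (\<epsilon> * x)"
      unfolding pe by (intro add_right_mono measure_Un_le) auto
    finally have up: "prob {\<omega>\<in>space M. V \<omega> + W \<omega> > x} \<le> ?PV ((1 - \<epsilon>) * x) + ?PW ((1 - \<epsilon>) * x) + ?PV (\<epsilon> * x) * ?PW (\<epsilon> * x)" .
    have "?PV x + ?PW x - ?PV x * ?PW x = prob ({\<omega>\<in>space M. V \<omega> > x} \<union> {\<omega>\<in>space M. W \<omega> > x})"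
    proof -
      have "prob ({\<omega>\<in>space M. V \<omega> > x} \<union> {\<omega>\<in>space M. W \<omega> > x}) = ?PV x + ?PW x -
          prob ({\<omega>\<in>space M. V \<omega> > x} \<inter> {\<omega>\<in>space M. W \<omega> > x})"
        by (intro measure_Un3) (auto simp: fmeasurable_def less_top[symmetric])
      moreover have "{\<omega>\<in>space M. V \<omega> > x} \<inter> {\<omega>\<in>space M. W \<omega> > x} = {\<omega>\<in>space M. V \<omega> \<in> {x<..} \<and> W \<omega> \<in> {x<..}}"
        by auto
      ultimately show ?thesis using pe[of x x] by simp
    qed
    also have "\<dots> \<le> prob {\<omega>\<in>space M. V \<omega> + W \<omega> > x}"
      using nn by (intro finite_measure_mono) (auto, smt (verit) nn, smt (verit) nn)
    finally have lo: "?PV x + ?PW x - ?PV x * ?PW x \<le> prob {\<omega>\<in>space M. V \<omega> + W \<omega> > x}" .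
    have "D x = (?PV x + ?PW x - ?PV x * ?PW x) / T x" "U x = (?PV ((1 - \<epsilon>) * x) + ?PW ((1 - \<epsilon>) * x) + ?PV (\<epsilon> * x) * ?PW (\<epsilon> * x)) / T x"
      unfolding U_def D_def using elim by (auto simp: field_simps)
    then show ?case using up lo elim by (simp add: divide_right_mono)
  qed
  ultimately show "\<exists>U D. (U \<longlongrightarrow> a * (1 + (-1) * \<epsilon>) powr -\<kappa> + b * (1 + (-1) * \<epsilon>) powr -\<kappa>) at_top \<and> (D \<longlongrightarrow> a + b) at_top \<and>
      eventually (\<lambda>x. D x \<le> prob {\<omega>\<in>space M. V \<omega> + W \<omega> > x} / T x \<and>
      prob {\<omega>\<in>space M. V \<omega> + W \<omega> > x} / T x \<le> U x) at_top"
    by auto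
next
  show "((\<lambda>\<epsilon>. a * (1 + - 1 * \<epsilon>) powr - \<kappa> + b * (1 + - 1 * \<epsilon>) powr - \<kappa>) \<longlongrightarrow> a + b) (at_right 0)"
    by (intro tendsto_add powr_right_lim)
qed auto

lemma RL_T: "RL T 1"
  unfolding RL_def
  by (rule Lim_transform_eventually[OF tendsto_const]) (use T_pos in \<open>auto elim: eventually_mono\<close>)

lemma RL_eta:
  assumes "c \<ge> 0" "k \<ge> 1"
  shows "RL (\<lambda>x. prob {\<omega>\<in>space M. c * real (\<eta> k \<omega>) > x}) (c powr \<kappa>)"
proof -
  have eq: "prob {\<omega>\<in>space M. c * real (\<eta> k \<omega>) > x} = prob {\<omega>\<in>space M. c * real (\<eta> 1 \<omega>) > x}" for x
  proof -
    have "prob {\<omega>\<in>space M. c * real (\<eta> k \<omega>) > x} = measure (distr M (count_space UNIV) (\<eta> k)) {n. c * real n > x}"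
      using assms by (subst measure_distr) (auto intro!: arg_cong[where f=prob])
    also have "\<dots> = measure (distr M (count_space UNIV) (\<eta> 1)) {n. c * real n > x}"
      using eta_id[OF assms(2)] by simp
    also have "\<dots> = prob {\<omega>\<in>space M. c * real (\<eta> 1 \<omega>) > x}"
      by (subst measure_distr) (auto intro!: arg_cong[where f=prob])
    finally show ?thesis .
  qed
  show ?thesis
  proof (cases "c = 0")
    case True
    have "eventually (\<lambda>x. 0 = prob {\<omega>\<in>space M. c * real (\<eta> k \<omega>) > x} / T x) at_top"
      using eventually_ge_at_top[of 0] by eventually_elim (simp add: True)
    then show ?thesis unfolding RL_def using True
      by (intro Lim_transform_eventually[OF tendsto_const]) auto
  next
    case False
    then have c: "c > 0" using assms by simp
    have "((\<lambda>x. T ((1/c) * x) / T x) \<longlongrightarrow> 1 * (1/c) powr -\<kappa>) at_top"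
      using c by (intro RL_scale RL_T) auto
    moreover have "T ((1/c) * x) = prob {\<omega>\<in>space M. c * real (\<eta> k \<omega>) > x}" for x
      unfolding eq T_def using c by (intro arg_cong[where f=prob]) (auto simp: field_simps)
    moreover have "1 * (1/c) powr -\<kappa> = c powr \<kappa>"
      using c by (simp add: powr_minus_divide powr_divide)
    ultimately show ?thesis unfolding RL_def by simp
  qed
qed

end


definition Aset :: "nat \<Rightarrow> (nat \<times> nat + nat) set" where
  "Aset n = {Inl (k,i) | k i. 1 \<le> k \<and> k \<le> n \<and> 1 \<le> i} \<union> {Inr k | k. 1 \<le> k \<and> k \<le> n}"

definition Gf :: "nat \<Rightarrow> (nat \<times> nat + nat \<Rightarrow> nat) \<Rightarrow> nat" where
  "Gf n = bpi (\<lambda>k i f. f (Inl (k,i))) (\<lambda>k f. f (Inr k)) n"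

lemma Gf_0[simp]: "Gf 0 f = 0" by (simp add: Gf_def)
lemma Gf_Suc: "Gf (Suc n) f = (\<Sum>i=1..Gf n f. f (Inl (Suc n, i))) + f (Inr (Suc n))"
  by (simp add: Gf_def)

lemma bpi_Gf: "bpi \<xi> \<eta> n \<omega> = Gf n (\<lambda>j. Xall \<xi> \<eta> j \<omega>)"
  by (induction n) (simp_all add: Gf_Suc Xall_def)

lemma Aset_mono: "m \<le> n \<Longrightarrow> Aset m \<subseteq> Aset n"
  by (auto simp: Aset_def)

lemma Gf_restrict: "Aset n \<subseteq> A \<Longrightarrow> Gf n (restrict f A) = Gf n f"
proof (induction n)
  case 0 then show ?case by simp
next
  case (Suc n)
  have "Aset n \<subseteq> A" using Suc.prems Aset_mono[of n "Suc n"] by auto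
  then have IH: "Gf n (restrict f A) = Gf n f" by (rule Suc.IH)
  have "Inl (Suc n, i) \<in> A" if "i \<ge> 1" for i using Suc.prems that by (auto simp: Aset_def)
  moreover have "Inr (Suc n) \<in> A" using Suc.prems by (auto simp: Aset_def)
  ultimately show ?case unfolding Gf_Suc IH by (simp add: restrict_def)
qed

lemma step_meas:
  assumes inA: "\<And>i. i \<ge> 1 \<Longrightarrow> Inl (Suc n, i) \<in> A" and inA2: "Inr (Suc n) \<in> A"
  shows "(\<lambda>f. (\<Sum>i=1..k. f (Inl (Suc n, i))) + f (Inr (Suc n))) \<in> measurable (PiM A (\<lambda>_. count_space UNIV)) (count_space (UNIV::nat set))"
proof (rule measurable_real_imp_nat)
  have c: "(\<lambda>f. real (f j)) \<in> borel_measurable (PiM A (\<lambda>_. count_space UNIV))" if "j \<in> A" for j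
    using measurable_component_singleton[OF that, of "\<lambda>_. count_space UNIV"] by measurable
  show "(\<lambda>f. real ((\<Sum>i=1..k. f (Inl (Suc n, i))) + f (Inr (Suc n)))) \<in> borel_measurable (PiM A (\<lambda>_. count_space UNIV))"
    unfolding of_nat_add of_nat_sum using inA inA2 c
    by (intro borel_measurable_add borel_measurable_sum) auto
qed

lemma Gf_meas: "Aset n \<subseteq> A \<Longrightarrow> Gf n \<in> measurable (PiM A (\<lambda>_. count_space UNIV)) (count_space UNIV)"
proof (induction n)
  case 0 then show ?case by simp
next
  case (Suc n)
  have "Aset n \<subseteq> A" using Suc.prems Aset_mono[of n "Suc n"] by auto
  then have IH: "Gf n \<in> measurable (PiM A (\<lambda>_. count_space UNIV)) (count_space UNIV)" by (rule Suc.IH)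
  have inA: "Inl (Suc n, i) \<in> A" if "i \<ge> 1" for i using Suc.prems that by (auto simp: Aset_def)
  have inA2: "Inr (Suc n) \<in> A" using Suc.prems by (auto simp: Aset_def)
  have "(\<lambda>f. (\<lambda>k f. (\<Sum>i=1..k. f (Inl (Suc n, i))) + f (Inr (Suc n))) (Gf n f) f) \<in> measurable (PiM A (\<lambda>_. count_space UNIV)) (count_space UNIV)"
    by (rule measurable_compose_countable[OF _ IH]) (rule step_meas[OF inA inA2])
  then show ?case by (simp add: Gf_Suc[abs_def])
qed



lemma powr_sum_le:
  fixes a :: "'i \<Rightarrow> real"
  assumes "finite I" "p \<ge> 1" "\<And>i. i \<in> I \<Longrightarrow> a i \<ge> 0"
  shows "(\<Sum>i\<in>I. a i) powr p \<le> real (card I) powr (p - 1) * (\<Sum>i\<in>I. a i powr p)"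
proof -
  define I' where "I' = {i\<in>I. a i > 0}"
  have fin: "finite I'" using assms(1) by (simp add: I'_def)
  have s1: "(\<Sum>i\<in>I. a i) = (\<Sum>i\<in>I'. a i)"
    unfolding I'_def using assms by (intro sum.mono_neutral_right) force+
  have s2: "(\<Sum>i\<in>I. a i powr p) = (\<Sum>i\<in>I'. a i powr p)"
    unfolding I'_def using assms by (intro sum.mono_neutral_right) force+
  have nn: "0 \<le> (\<Sum>i\<in>I'. a i powr p)" by (intro sum_nonneg) auto
  show ?thesis
  proof (cases "I' = {}")
    case True
    then show ?thesis using s1 s2 by simp
  next
    case False
    let ?c = "real (card I')"
    have c: "?c > 0" using False fin by (simp add: card_gt_0_iff)
    have "(\<Sum>i\<in>I'. (1 / ?c) *\<^sub>R a i) powr p \<le> (\<Sum>i\<in>I'. (1 / ?c) * a i powr p)"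
      by (rule convex_on_sum[OF fin False powr_convex[OF assms(2)]]) (use c in \<open>auto simp: I'_def\<close>)
    then have "((\<Sum>i\<in>I'. a i) / ?c) powr p \<le> (\<Sum>i\<in>I'. a i powr p) / ?c"
      by (simp add: sum_distrib_right[symmetric] sum_distrib_left[symmetric] divide_inverse mult.commute)
    then have "(\<Sum>i\<in>I'. a i) powr p / ?c powr p \<le> (\<Sum>i\<in>I'. a i powr p) / ?c"
      using c by (simp add: powr_divide sum_nonneg I'_def)
    then have "(\<Sum>i\<in>I'. a i) powr p \<le> ?c powr p / ?c * (\<Sum>i\<in>I'. a i powr p)"
      using c by (simp add: field_simps)
    also have "?c powr p / ?c = ?c powr (p - 1)" using c by (simp add: powr_diff)
    also have "?c powr (p - 1) \<le> real (card I) powr (p - 1)"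
      using c assms(2) card_mono[OF assms(1), of I'] by (intro powr_mono2) (auto simp: I'_def)
    finally show ?thesis using s1 s2 nn by (metis mult_right_mono order_trans)
  qed
qed

context bpi_ctx begin

lemma Aset_J: "Aset n \<subseteq> Jset" by (auto simp: Aset_def Jset_def)

lemma Xall_meas: "j \<in> Jset \<Longrightarrow> Xall \<xi> \<eta> j \<in> measurable M (count_space UNIV)"
  using indep unfolding indep_vars_def by blast

lemma restrict_meas: "A \<subseteq> Jset \<Longrightarrow> (\<lambda>\<omega>. restrict (\<lambda>j. Xall \<xi> \<eta> j \<omega>) A) \<in> measurable M (PiM A (\<lambda>_. count_space UNIV))"
  by (intro measurable_restrict Xall_meas) auto

lemma X_rep: "bpi \<xi> \<eta> n \<omega> = Gf n (restrict (\<lambda>j. Xall \<xi> \<eta> j \<omega>) (Aset n))"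
  by (simp add: bpi_Gf Gf_restrict)

lemma X_meas[measurable]: "(\<lambda>\<omega>. bpi \<xi> \<eta> n \<omega>) \<in> measurable M (count_space UNIV)"
proof -
  have "(\<lambda>\<omega>. Gf n (restrict (\<lambda>j. Xall \<xi> \<eta> j \<omega>) (Aset n))) \<in> measurable M (count_space UNIV)"
    using measurable_comp[OF restrict_meas[OF Aset_J] Gf_meas[of n "Aset n"]] by (simp add: o_def)
  then show ?thesis by (simp add: X_rep)
qed

lemma indep_funs:
  assumes "A \<inter> B = {}" "A \<subseteq> Jset" "B \<subseteq> Jset"
    and "f \<in> borel_measurable (PiM A (\<lambda>_. count_space UNIV))" "g \<in> borel_measurable (PiM B (\<lambda>_. count_space UNIV))"
  shows "indep_var borel (\<lambda>\<omega>. f (restrict (\<lambda>j. Xall \<xi> \<eta> j \<omega>) A)) borel (\<lambda>\<omega>. (g :: _ \<Rightarrow> real) (restrict (\<lambda>j. Xall \<xi> \<eta> j \<omega>) B))"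
  using indep_var_compose[OF indep_var_restrict[OF indep assms(1-3)] assms(4,5)] by (simp add: o_def)

lemma xi_transfer:
  assumes "n \<ge> 1" "i \<ge> 1"
  shows "integral\<^sup>L M (\<lambda>\<omega>. f (\<xi> n i \<omega>)) = integral\<^sup>L M (\<lambda>\<omega>. (f (\<xi> 1 1 \<omega>) :: real))"
    and "integrable M (\<lambda>\<omega>. f (\<xi> n i \<omega>)) \<longleftrightarrow> integrable M (\<lambda>\<omega>. (f (\<xi> 1 1 \<omega>) :: real))"
proof -
  have m: "\<xi> n i \<in> measurable M (count_space UNIV)" "\<xi> 1 1 \<in> measurable M (count_space UNIV)"
    using assms by auto
  show "integral\<^sup>L M (\<lambda>\<omega>. f (\<xi> n i \<omega>)) = integral\<^sup>L M (\<lambda>\<omega>. f (\<xi> 1 1 \<omega>))"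
    using integral_distr[OF m(1), of f] integral_distr[OF m(2), of f] xi_id[OF assms] by simp
  show "integrable M (\<lambda>\<omega>. f (\<xi> n i \<omega>)) \<longleftrightarrow> integrable M (\<lambda>\<omega>. f (\<xi> 1 1 \<omega>))"
    using integrable_distr_eq[OF m(1), of f] integrable_distr_eq[OF m(2), of f] xi_id[OF assms] by simp
qed

end


context bpi_ctx begin

abbreviation "alpha \<equiv> expectation (\<lambda>\<omega>. real (\<xi> 1 1 \<omega>))"
abbreviation "Emom \<equiv> expectation (\<lambda>\<omega>. real (\<xi> 1 1 \<omega>) powr p)"

lemma Z_moment:
  assumes g: "g \<ge> 1" and y: "y > 0"
  shows "prob {\<omega>\<in>space M. (\<Sum>i=1..m. real (\<xi> g i \<omega>)) > y} \<le> real m powr p * Emom / y powr p"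
proof (cases "m = 0")
  case True
  then show ?thesis using y by simp
next
  case False
  then have m: "real m > 0" by simp
  define S where "S \<omega> = (\<Sum>i=1..m. real (\<xi> g i \<omega>) powr p)" for \<omega>
  define c where "c = y powr p / real m powr (p - 1)"
  have c: "c > 0" using y m by (simp add: c_def)
  have intS: "integrable M S"
    unfolding S_def by (rule Bochner_Integration.integrable_sum) (use xi_transfer(2)[OF g, of _ "\<lambda>k. real k powr p"] mom in auto)
  have ES: "expectation S = real m * Emom"
    unfolding S_def using xi_transfer(1)[OF g, of _ "\<lambda>k. real k powr p"] mom xi_transfer(2)[OF g, of _ "\<lambda>k. real k powr p"]
    by (subst Bochner_Integration.integral_sum) auto
  have "{\<omega>\<in>space M. (\<Sum>i=1..m. real (\<xi> g i \<omega>)) > y} \<subseteq> {\<omega>\<in>space M. S \<omega> \<ge> c}"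
  proof safe
    fix \<omega> assume \<omega>: "\<omega> \<in> space M" and gt: "(\<Sum>i=1..m. real (\<xi> g i \<omega>)) > y"
    have "y powr p < (\<Sum>i=1..m. real (\<xi> g i \<omega>)) powr p"
      using gt y p1 by (intro powr_less_mono2) auto
    also have "\<dots> \<le> real m powr (p - 1) * S \<omega>"
      unfolding S_def using powr_sum_le[of "{1..m}" p "\<lambda>i. real (\<xi> g i \<omega>)"] p1 by simp
    finally show "c \<le> S \<omega>" unfolding c_def using m by (simp add: field_simps)
  qed
  then have "prob {\<omega>\<in>space M. (\<Sum>i=1..m. real (\<xi> g i \<omega>)) > y} \<le> prob {\<omega>\<in>space M. S \<omega> \<ge> c}"
    using g unfolding S_def by (intro finite_measure_mono) auto
  also have "\<dots> \<le> expectation S / c"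
    using intS c unfolding S_def by (intro integral_Markov_inequality_measure[where A="space M"]) (auto intro!: sum_nonneg AE_I2)
  also have "\<dots> = real m powr p * Emom / y powr p"
    unfolding ES c_def using m by (simp add: field_simps powr_diff)
  finally show ?thesis .
qed

end

context bpi_ctx begin

lemma trunc_tendsto: "(\<lambda>k::nat. expectation (\<lambda>\<omega>. real (\<xi> 1 1 \<omega>) - min (real (\<xi> 1 1 \<omega>)) (real k))) \<longlonglongrightarrow> 0"
proof -
  have "(\<lambda>k::nat. expectation (\<lambda>\<omega>. real (\<xi> 1 1 \<omega>) - min (real (\<xi> 1 1 \<omega>)) (real k))) \<longlonglongrightarrow> expectation (\<lambda>\<omega>. 0::real)"
  proof (rule integral_dominated_convergence[where w="\<lambda>\<omega>. real (\<xi> 1 1 \<omega>)"])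
    show "integrable M (\<lambda>\<omega>. real (\<xi> 1 1 \<omega>))" by (rule int_xi)
    show "AE \<omega> in M. (\<lambda>k::nat. real (\<xi> 1 1 \<omega>) - min (real (\<xi> 1 1 \<omega>)) (real k)) \<longlonglongrightarrow> 0"
    proof (rule AE_I2)
      fix \<omega>
      have "eventually (\<lambda>k::nat. real (\<xi> 1 1 \<omega>) - min (real (\<xi> 1 1 \<omega>)) (real k) = 0) sequentially"
        using eventually_ge_at_top[of "\<xi> 1 1 \<omega>"] by eventually_elim auto
      then show "(\<lambda>k::nat. real (\<xi> 1 1 \<omega>) - min (real (\<xi> 1 1 \<omega>)) (real k)) \<longlonglongrightarrow> 0"
        by (rule tendsto_eventually)
    qed
    show "AE \<omega> in M. norm (real (\<xi> 1 1 \<omega>) - min (real (\<xi> 1 1 \<omega>)) (real k)) \<le> real (\<xi> 1 1 \<omega>)" for k :: nat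
      by (rule AE_I2) auto
  qed auto
  then show ?thesis by simp
qed

lemma exp_small:
  assumes "c > 0" "e > 0"
  shows "\<exists>M0::nat. \<forall>m\<ge>M0. 2 * exp (- (c * real m)) \<le> e"
proof (intro exI allI impI)
  fix m :: nat assume m: "nat \<lceil>2 / (c * e)\<rceil> \<le> m"
  then have "2 / (c * e) \<le> real m" by linarith
  then have "2 / (c * e) * (c * e) \<le> real m * (c * e)" using assms by (intro mult_right_mono) auto
  then have "2 \<le> c * e * real m" using assms by (simp add: algebra_simps)
  have "1 + c * real m \<le> exp (c * real m)" by (rule exp_ge_add_one_self)
  moreover have "0 < 1 + c * real m" using assms by (simp add: add_pos_nonneg)
  ultimately have "2 / exp (c * real m) \<le> 2 / (1 + c * real m)"
    by (intro divide_left_mono) auto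
  then have "2 * exp (- (c * real m)) \<le> 2 / (1 + c * real m)"
    by (simp add: exp_minus divide_inverse)
  also have "\<dots> \<le> e"
  proof -
    have "2 \<le> e * (1 + c * real m)" using \<open>2 \<le> c * e * real m\<close> assms by (simp add: algebra_simps)
    then show ?thesis using \<open>0 < 1 + c * real m\<close> by (simp add: pos_divide_le_eq)
  qed
  finally show "2 * exp (- (c * real m)) \<le> e" .
qed

end

context bpi_ctx begin

lemma hoeff:
  assumes g: "g \<ge> 1" and K: "K > 0" and m: "m \<ge> 1" and t: "t \<ge> 0"
  shows "prob {\<omega>\<in>space M. \<bar>(\<Sum>i=1..m. min (real (\<xi> g i \<omega>)) K) - real m * expectation (\<lambda>\<omega>. min (real (\<xi> 1 1 \<omega>)) K)\<bar> \<ge> t}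
     \<le> 2 * exp (-2 * t\<^sup>2 / (real m * K\<^sup>2))"
proof -
  define I :: "(nat \<times> nat + nat) set" where "I = (\<lambda>i. Inl (g, i)) ` {1..m}"
  define X where "X j \<omega> = min (real (Xall \<xi> \<eta> j \<omega>)) K" for j \<omega>
  define Y where "Y \<omega> = min (real (\<xi> 1 1 \<omega>)) K" for \<omega>
  have IJ: "I \<subseteq> Jset" using g by (auto simp: I_def Jset_def)
  have cardI: "card I = m" unfolding I_def by (subst card_image) (auto simp: inj_on_def)
  have indX: "indep_vars (\<lambda>_. borel) X I"
    unfolding X_def using indep_vars_subset[OF indep IJ]
    by (rule indep_vars_compose2) measurable
  have dX: "distr M borel (X j) = distr M borel Y" if "j \<in> I" for j
  proof -
    obtain i where i: "j = Inl (g, i)" "i \<ge> 1" using \<open>j \<in> I\<close> by (auto simp: I_def)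
    have mi: "\<xi> g i \<in> measurable M (count_space UNIV)" using g i by auto
    have "distr M borel (X j) = distr (distr M (count_space UNIV) (\<xi> g i)) borel (\<lambda>n. min (real n) K)"
    proof -
      have "X j = (\<lambda>n. min (real n) K) \<circ> \<xi> g i" by (auto simp: X_def Xall_def i)
      then show ?thesis using mi by (simp add: distr_distr)
    qed
    also have "\<dots> = distr (distr M (count_space UNIV) (\<xi> 1 1)) borel (\<lambda>n. min (real n) K)"
      using xi_id[OF g i(2)] by simp
    also have "\<dots> = distr M borel Y"
    proof -
      have "Y = (\<lambda>n. min (real n) K) \<circ> \<xi> 1 1" by (auto simp: Y_def)
      then show ?thesis by (simp add: distr_distr)
    qed
    finally show ?thesis .
  qed
  interpret H: Hoeffding_ineq_iid M I X Y 0 K "expectation Y"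
  proof unfold_locales
    show "finite I" by (simp add: I_def)
    show "indep_vars (\<lambda>_. borel) X I" by (rule indX)
    show "distr M borel (X i) = distr M borel Y" if "i \<in> I" for i using dX[OF that] .
    show "random_variable borel Y" unfolding Y_def by measurable
    show "AE x in M. Y x \<in> {0..K}" using K by (auto simp: Y_def)
  qed simp
  have "I \<noteq> {}" using m by (auto simp: I_def)
  have sumeq: "(\<Sum>j\<in>I. X j \<omega>) = (\<Sum>i=1..m. min (real (\<xi> g i \<omega>)) K)" for \<omega>
    unfolding I_def by (subst sum.reindex) (auto simp: inj_on_def X_def Xall_def)
  show ?thesis
    using H.Hoeffding_ineq_abs_ge[OF t K \<open>I \<noteq> {}\<close>] unfolding sumeq cardI Y_def by simp
qed

lemma wlln:
  assumes g: "g \<ge> 1" and th: "\<theta> > 0" and e: "e > 0"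
  shows "\<exists>M0. \<forall>m\<ge>M0. prob {\<omega>\<in>space M. \<bar>(\<Sum>i=1..m. real (\<xi> g i \<omega>)) - alpha * real m\<bar> > \<theta> * real m} \<le> e"
proof -
  define r where "r K = expectation (\<lambda>\<omega>. real (\<xi> 1 1 \<omega>) - min (real (\<xi> 1 1 \<omega>)) K)" for K :: real
  have "eventually (\<lambda>k::nat. r (real k) < min (\<theta>/4) (\<theta>*e/8) \<and> k \<ge> 1) sequentially"
    using order_tendstoD(2)[OF trunc_tendsto[folded r_def], of "min (\<theta>/4) (\<theta>*e/8)"] th e eventually_ge_at_top[of 1]
    by (auto simp: eventually_conj_iff)
  then obtain k :: nat where k: "r (real k) < min (\<theta>/4) (\<theta>*e/8)" "k \<ge> 1"
    by (auto simp: eventually_sequentially)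
  define K where "K = real k"
  have K: "K > 0" using k by (simp add: K_def)
  define \<mu> where "\<mu> = expectation (\<lambda>\<omega>. min (real (\<xi> 1 1 \<omega>)) K)"
  have intmin: "integrable M (\<lambda>\<omega>. min (real (\<xi> 1 1 \<omega>)) K)"
    by (rule Bochner_Integration.integrable_bound[OF int_xi]) (use K in auto)
  have rK: "r K = alpha - \<mu>"
    unfolding r_def \<mu>_def by (rule Bochner_Integration.integral_diff[OF int_xi intmin])
  have r0: "r K \<ge> 0" unfolding r_def by (intro integral_nonneg_AE) auto
  obtain M0 :: nat where M0: "\<And>m. m \<ge> M0 \<Longrightarrow> 2 * exp (- ((\<theta>\<^sup>2 / (2 * K\<^sup>2)) * real m)) \<le> e/2"
    using exp_small[of "\<theta>\<^sup>2 / (2 * K\<^sup>2)" "e/2"] th K e by auto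
  show ?thesis
  proof (intro exI allI impI)
    fix m assume mM: "max M0 1 \<le> m"
    then have m: "m \<ge> 1" "m \<ge> M0" by auto
    have mpos: "real m > 0" using m by simp
    define Sy where "Sy \<omega> = (\<Sum>i=1..m. min (real (\<xi> g i \<omega>)) K)" for \<omega>
    define Sr where "Sr \<omega> = (\<Sum>i=1..m. real (\<xi> g i \<omega>) - min (real (\<xi> g i \<omega>)) K)" for \<omega>
    have intR: "integrable M (\<lambda>\<omega>. real (\<xi> g i \<omega>) - min (real (\<xi> g i \<omega>)) K)" if "i \<ge> 1" for i
      using xi_transfer(2)[OF g that, of "\<lambda>n. real n - min (real n) K"] int_xi intmin by auto
    have ESr: "expectation Sr = real m * r K"
    proof -
      have "expectation Sr = (\<Sum>i=1..m. expectation (\<lambda>\<omega>. real (\<xi> g i \<omega>) - min (real (\<xi> g i \<omega>)) K))"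
        unfolding Sr_def using intR by (subst Bochner_Integration.integral_sum) auto
      also have "\<dots> = (\<Sum>i=1..m. r K)"
        unfolding r_def using xi_transfer(1)[OF g, of _ "\<lambda>n. real n - min (real n) K"] by (intro sum.cong) auto
      finally show ?thesis by simp
    qed
    have sub: "{\<omega>\<in>space M. \<bar>(\<Sum>i=1..m. real (\<xi> g i \<omega>)) - alpha * real m\<bar> > \<theta> * real m} \<subseteq>
       {\<omega>\<in>space M. \<bar>Sy \<omega> - real m * \<mu>\<bar> \<ge> \<theta> * real m / 2} \<union> {\<omega>\<in>space M. Sr \<omega> \<ge> \<theta> * real m / 4}"
    proof safe
      fix \<omega> assume \<omega>: "\<omega> \<in> space M" and big: "\<bar>(\<Sum>i=1..m. real (\<xi> g i \<omega>)) - alpha * real m\<bar> > \<theta> * real m"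
        and n1: "\<not> \<theta> * real m / 4 \<le> Sr \<omega>"
      have decomp: "(\<Sum>i=1..m. real (\<xi> g i \<omega>)) - alpha * real m = (Sy \<omega> - real m * \<mu>) + (Sr \<omega> - real m * r K)"
        unfolding Sy_def Sr_def rK by (simp add: sum_subtractf algebra_simps)
      have "Sr \<omega> \<ge> 0" unfolding Sr_def by (intro sum_nonneg) auto
      moreover have "real m * r K \<le> real m * (\<theta>/4)" using k(1) K_def by (intro mult_left_mono) auto
      ultimately show "\<theta> * real m / 2 \<le> \<bar>Sy \<omega> - real m * \<mu>\<bar>"
      proof -
        have aux: "\<bar>a + (b - c)\<bar> > t \<Longrightarrow> 0 \<le> b \<Longrightarrow> b < t/4 \<Longrightarrow> 0 \<le> c \<Longrightarrow> c \<le> t/4 \<Longrightarrow> t/2 \<le> \<bar>a\<bar>" for a b c t :: real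
          by arith
        have h1: "\<bar>(Sy \<omega> - real m * \<mu>) + (Sr \<omega> - real m * r K)\<bar> > \<theta> * real m" using big decomp by simp
        have h2: "Sr \<omega> < \<theta> * real m / 4" using n1 by simp
        have h3: "0 \<le> real m * r K" using r0 mpos by simp
        have h4: "real m * r K \<le> \<theta> * real m / 4" using \<open>real m * r K \<le> real m * (\<theta>/4)\<close> by (simp add: mult.commute)
        show ?thesis by (rule aux[OF h1 \<open>Sr \<omega> \<ge> 0\<close> h2 h3 h4])
      qed
    qed
    have "prob {\<omega>\<in>space M. \<bar>(\<Sum>i=1..m. real (\<xi> g i \<omega>)) - alpha * real m\<bar> > \<theta> * real m} \<le>
        prob {\<omega>\<in>space M. \<bar>Sy \<omega> - real m * \<mu>\<bar> \<ge> \<theta> * real m / 2} + prob {\<omega>\<in>space M. Sr \<omega> \<ge> \<theta> * real m / 4}"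
      using g unfolding Sy_def Sr_def by (intro prob_le_2[OF sub[unfolded Sy_def Sr_def]]) auto
    also have "prob {\<omega>\<in>space M. \<bar>Sy \<omega> - real m * \<mu>\<bar> \<ge> \<theta> * real m / 2} \<le> e/2"
    proof -
      have "prob {\<omega>\<in>space M. \<bar>Sy \<omega> - real m * \<mu>\<bar> \<ge> \<theta> * real m / 2} \<le> 2 * exp (-2 * (\<theta> * real m / 2)\<^sup>2 / (real m * K\<^sup>2))"
        unfolding Sy_def \<mu>_def using th by (intro hoeff g K m) auto
      also have "-2 * (\<theta> * real m / 2)\<^sup>2 / (real m * K\<^sup>2) = - ((\<theta>\<^sup>2 / (2 * K\<^sup>2)) * real m)"
        using mpos K by (simp add: field_simps power2_eq_square)
      finally show ?thesis using M0[OF m(2)] by simp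
    qed
    also have "prob {\<omega>\<in>space M. Sr \<omega> \<ge> \<theta> * real m / 4} \<le> e/2"
    proof -
      have "prob {\<omega>\<in>space M. Sr \<omega> \<ge> \<theta> * real m / 4} \<le> expectation Sr / (\<theta> * real m / 4)"
        unfolding Sr_def using intR th mpos
        by (intro integral_Markov_inequality_measure[where A="space M"]) (auto intro!: sum_nonneg AE_I2)
      also have "\<dots> = 4 * r K / \<theta>" unfolding ESr using mpos th by (simp add: field_simps)
      also have "\<dots> \<le> e/2" using k(1) K_def th by (simp add: field_simps)
      finally show ?thesis .
    qed
    finally show "prob {\<omega>\<in>space M. \<bar>(\<Sum>i=1..m. real (\<xi> g i \<omega>)) - alpha * real m\<bar> > \<theta> * real m} \<le> e" by simp
  qed
qed

end

context bpi_ctx begin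

lemma sum_prob:
  fixes N :: "'a \<Rightarrow> nat"
  assumes [measurable]: "N \<in> measurable M (count_space UNIV)" and "finite S"
  shows "(\<Sum>m\<in>S. prob {\<omega>\<in>space M. N \<omega> = m}) = prob {\<omega>\<in>space M. N \<omega> \<in> S}"
proof -
  have "prob (\<Union>m\<in>S. {\<omega>\<in>space M. N \<omega> = m}) = (\<Sum>m\<in>S. prob {\<omega>\<in>space M. N \<omega> = m})"
    using assms(2) by (intro measure_finite_Union) (auto simp: disjoint_family_on_def)
  moreover have "(\<Union>m\<in>S. {\<omega>\<in>space M. N \<omega> = m}) = {\<omega>\<in>space M. N \<omega> \<in> S}" by auto
  ultimately show ?thesis by simp
qed

lemma moment_bound:
  fixes N :: "'a \<Rightarrow> nat"
  assumes [measurable]: "N \<in> measurable M (count_space UNIV)"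
    and RN: "RL (\<lambda>x. prob {\<omega>\<in>space M. real (N \<omega>) > x}) aN"
  shows "\<exists>C y0. y0 > 0 \<and> (\<forall>y\<ge>y0. (\<Sum>m\<in>{0..nat \<lfloor>y\<rfloor>}. prob {\<omega>\<in>space M. N \<omega> = m} * real m powr p) \<le> C * y powr p * T y)"
proof -
  define h where "h y = (\<Sum>m\<in>{0..nat \<lfloor>y\<rfloor>}. prob {\<omega>\<in>space M. N \<omega> = m} * real m powr p)" for y :: real
  define \<rho> where "\<rho> = (2 powr \<kappa> + 2 powr p) / 2"
  have r1: "2 powr \<kappa> < \<rho>" "\<rho> < 2 powr p" using pk by (auto simp: \<rho>_def)
  have \<rho>pos: "\<rho> > 0" using r1 by (smt (verit) powr_gt_zero)
  define C1 where "C1 = aN * (1/2) powr -\<kappa> + 1"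
  have h_mono: "h y \<le> h y'" if "y \<le> y'" for y y'
    unfolding h_def using that by (intro sum_mono2) (auto intro: nat_mono floor_mono)
  have h_step: "h y \<le> h (y/2) + y powr p * prob {\<omega>\<in>space M. real (N \<omega>) > y/2}" if y: "y \<ge> 0" for y
  proof -
    have split: "{0..nat \<lfloor>y\<rfloor>} = {0..nat \<lfloor>y/2\<rfloor>} \<union> {nat \<lfloor>y/2\<rfloor><..nat \<lfloor>y\<rfloor>}"
    proof -
      have "\<lfloor>y/2\<rfloor> \<le> \<lfloor>y\<rfloor>" using y by (intro floor_mono) linarith
      then have "nat \<lfloor>y/2\<rfloor> \<le> nat \<lfloor>y\<rfloor>" by (rule nat_mono)
      then show ?thesis by auto
    qed
    have "h y = h (y/2) + (\<Sum>m\<in>{nat \<lfloor>y/2\<rfloor><..nat \<lfloor>y\<rfloor>}. prob {\<omega>\<in>space M. N \<omega> = m} * real m powr p)"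
      unfolding h_def split by (subst sum.union_disjoint) auto
    also have "(\<Sum>m\<in>{nat \<lfloor>y/2\<rfloor><..nat \<lfloor>y\<rfloor>}. prob {\<omega>\<in>space M. N \<omega> = m} * real m powr p)
        \<le> (\<Sum>m\<in>{nat \<lfloor>y/2\<rfloor><..nat \<lfloor>y\<rfloor>}. prob {\<omega>\<in>space M. N \<omega> = m} * y powr p)"
    proof (intro sum_mono mult_left_mono)
      fix m assume "m \<in> {nat \<lfloor>y/2\<rfloor><..nat \<lfloor>y\<rfloor>}"
      then have "real m \<le> y" using y by (auto simp: le_nat_iff le_floor_iff)
      then show "real m powr p \<le> y powr p" using p1 by (intro powr_mono2) auto
    qed auto
    also have "\<dots> = y powr p * prob {\<omega>\<in>space M. N \<omega> \<in> {nat \<lfloor>y/2\<rfloor><..nat \<lfloor>y\<rfloor>}}"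
    proof -
      have "(\<Sum>m\<in>{nat \<lfloor>y/2\<rfloor><..nat \<lfloor>y\<rfloor>}. prob {\<omega>\<in>space M. N \<omega> = m} * y powr p)
          = (\<Sum>m\<in>{nat \<lfloor>y/2\<rfloor><..nat \<lfloor>y\<rfloor>}. prob {\<omega>\<in>space M. N \<omega> = m}) * y powr p"
        by (rule sum_distrib_right[symmetric])
      also have "\<dots> = prob {\<omega>\<in>space M. N \<omega> \<in> {nat \<lfloor>y/2\<rfloor><..nat \<lfloor>y\<rfloor>}} * y powr p"
        using sum_prob[OF assms(1), of "{nat \<lfloor>y/2\<rfloor><..nat \<lfloor>y\<rfloor>}"] by simp
      finally show ?thesis by (simp only: mult.commute)
    qed
    also have "\<dots> \<le> y powr p * prob {\<omega>\<in>space M. real (N \<omega>) > y/2}"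
    proof (intro mult_left_mono finite_measure_mono)
      show "{\<omega>\<in>space M. N \<omega> \<in> {nat \<lfloor>y/2\<rfloor><..nat \<lfloor>y\<rfloor>}} \<subseteq> {\<omega>\<in>space M. real (N \<omega>) > y/2}"
      proof safe
        fix \<omega> assume "N \<omega> \<in> {nat \<lfloor>y/2\<rfloor><..nat \<lfloor>y\<rfloor>}"
        then have "nat \<lfloor>y/2\<rfloor> < N \<omega>" by simp
        then show "y/2 < real (N \<omega>)" using y by linarith
      qed
    qed auto
    finally show ?thesis by simp
  qed
  have ev1: "eventually (\<lambda>y. prob {\<omega>\<in>space M. real (N \<omega>) > (1/2) * y} / T y < C1) at_top"
    using RL_scale[OF RN, of "1/2"] unfolding C1_def by (intro order_tendstoD(2)) auto
  have ev2: "eventually (\<lambda>y. T ((1/2) * y) / T y < \<rho>) at_top"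
  proof -
    have "((\<lambda>y. T ((1/2) * y) / T y) \<longlongrightarrow> 1 * (1/2) powr -\<kappa>) at_top"
      by (rule RL_scale[OF RL_T]) simp
    moreover have "1 * (1/2) powr -\<kappa> = 2 powr \<kappa>" by (simp add: powr_minus_divide powr_divide)
    ultimately show ?thesis using r1 by (intro order_tendstoD(2)) auto
  qed
  from eventually_conj[OF eventually_conj[OF ev1 ev2] T_pos]
  obtain y1 where y1: "\<And>y. y \<ge> y1 \<Longrightarrow> prob {\<omega>\<in>space M. real (N \<omega>) > (1/2) * y} / T y < C1 \<and> T ((1/2) * y) / T y < \<rho> \<and> T y > 0"
    by (auto simp: eventually_at_top_linorder)
  define y0 where "y0 = max y1 1"
  have y0: "y0 > 0" "y0 \<ge> y1" by (auto simp: y0_def)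
  have T2y0: "T (2*y0) > 0" using y1[of "2*y0"] y0 by auto
  define C where "C = max (h (2*y0) / (y0 powr p * T (2*y0))) (C1 / (1 - \<rho> / 2 powr p))"
  have den: "1 - \<rho> / 2 powr p > 0" using r1 by (simp add: field_simps)
  have C1C: "C1 \<le> C * (1 - \<rho> / 2 powr p)"
  proof -
    have "C1 / (1 - \<rho> / 2 powr p) \<le> C" unfolding C_def by simp
    then have "C1 / (1 - \<rho> / 2 powr p) * (1 - \<rho> / 2 powr p) \<le> C * (1 - \<rho> / 2 powr p)"
      using den by (intro mult_right_mono) auto
    then show ?thesis using den by simp
  qed
  have Cnn: "C \<ge> 0" unfolding C_def using T2y0 y0 den
    by (intro max.coboundedI1 divide_nonneg_pos) (auto simp: h_def intro!: sum_nonneg)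
  have main: "h y \<le> C * y powr p * T y" if "y0 \<le> y" for y
  proof (rule dyadic_induct[OF y0(1) _ _ that])
    fix y assume y: "y0 \<le> y" "y < 2 * y0"
    have "h y \<le> h (2*y0)" using y by (intro h_mono) auto
    also have "\<dots> \<le> C * (y0 powr p * T (2*y0))"
    proof -
      have pos: "y0 powr p * T (2*y0) > 0" using T2y0 y0 by simp
      have "h (2*y0) / (y0 powr p * T (2*y0)) \<le> C" unfolding C_def by simp
      then have "h (2*y0) / (y0 powr p * T (2*y0)) * (y0 powr p * T (2*y0)) \<le> C * (y0 powr p * T (2*y0))"
        using pos by (intro mult_right_mono) auto
      moreover have "h (2*y0) / (y0 powr p * T (2*y0)) * (y0 powr p * T (2*y0)) = h (2*y0)"
      proof -
        have gen: "b > 0 \<Longrightarrow> a / b * b = a" for a b :: real by simp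
        show ?thesis by (rule gen[OF pos])
      qed
      ultimately show ?thesis by simp
    qed
    also have "\<dots> \<le> C * (y powr p * T y)"
    proof (intro mult_left_mono mult_mono)
      show "y0 powr p \<le> y powr p" using y y0 p1 by (intro powr_mono2) auto
      show "T (2*y0) \<le> T y" using y by (intro T_mono) auto
      show "C \<ge> 0" by (rule Cnn)
    qed (auto simp: T_nonneg)
    finally show "h y \<le> C * y powr p * T y" by (simp add: mult.assoc)
  next
    fix y assume y: "2 * y0 \<le> y" and IH: "h (y/2) \<le> C * (y/2) powr p * T (y/2)"
    have yy: "y \<ge> y1" "y > 0" using y y0 by auto
    have Ty: "T y > 0" using y1[OF yy(1)] by auto
    have a1: "prob {\<omega>\<in>space M. real (N \<omega>) > y/2} \<le> C1 * T y"
      using y1[OF yy(1)] Ty by (auto simp: field_simps)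
    have a2: "T (y/2) \<le> \<rho> * T y"
      using y1[OF yy(1)] Ty by (auto simp: field_simps)
    have "h y \<le> h (y/2) + y powr p * prob {\<omega>\<in>space M. real (N \<omega>) > y/2}"
      using h_step yy by auto
    also have "\<dots> \<le> C * (y/2) powr p * (\<rho> * T y) + y powr p * (C1 * T y)"
      using IH a1 a2 Cnn by (intro add_mono order.trans[OF IH] mult_left_mono) auto
    also have "\<dots> = y powr p * T y * (C * \<rho> / 2 powr p + C1)"
      using yy by (simp add: powr_divide field_simps)
    also have "\<dots> \<le> y powr p * T y * C"
      using C1C Ty by (intro mult_left_mono) (auto simp: field_simps)
    finally show "h y \<le> C * y powr p * T y" by (simp add: mult_ac)
  qed
  show ?thesis using y0 main unfolding h_def by blast
qed

end

context bpi_ctx begin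

lemma alpha_nonneg: "alpha \<ge> 0" by (intro integral_nonneg_AE) auto
lemma Emom_nonneg: "Emom \<ge> 0" by (intro integral_nonneg_AE) auto

lemma indep_N_Z:
  "indep_var borel (\<lambda>\<omega>. real (bpi \<xi> \<eta> n \<omega>)) borel (\<lambda>\<omega>. \<Sum>i=1..k. real (\<xi> (Suc n) i \<omega>))"
proof -
  define B :: "(nat \<times> nat + nat) set" where "B = (\<lambda>i. Inl (Suc n, i)) ` {1..k}"
  have AB: "Aset n \<inter> B = {}" "B \<subseteq> Jset" by (auto simp: B_def Aset_def Jset_def)
  have f: "(\<lambda>h. real (Gf n h)) \<in> borel_measurable (PiM (Aset n) (\<lambda>_. count_space UNIV))"
    using Gf_meas[of n "Aset n"] by measurable
  have c: "(\<lambda>h. real (h j)) \<in> borel_measurable (PiM B (\<lambda>_. count_space UNIV))" if "j \<in> B" for j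
    using measurable_component_singleton[OF that, of "\<lambda>_. count_space UNIV"] by measurable
  have g: "(\<lambda>h. \<Sum>i=1..k. real (h (Inl (Suc n, i)))) \<in> borel_measurable (PiM B (\<lambda>_. count_space UNIV))"
    by (intro borel_measurable_sum c) (auto simp: B_def)
  have "indep_var borel (\<lambda>\<omega>. real (Gf n (restrict (\<lambda>j. Xall \<xi> \<eta> j \<omega>) (Aset n)))) borel
      (\<lambda>\<omega>. \<Sum>i=1..k. real (restrict (\<lambda>j. Xall \<xi> \<eta> j \<omega>) B (Inl (Suc n, i))))"
    by (rule indep_funs[OF AB(1) Aset_J AB(2) f g])
  moreover have "(\<lambda>\<omega>. \<Sum>i=1..k. real (restrict (\<lambda>j. Xall \<xi> \<eta> j \<omega>) B (Inl (Suc n, i)))) = (\<lambda>\<omega>. \<Sum>i=1..k. real (\<xi> (Suc n) i \<omega>))"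
    by (auto simp: B_def Xall_def intro!: sum.cong)
  ultimately show ?thesis by (simp add: X_rep[symmetric])
qed

lemma prob_N_Z:
  "prob {\<omega>\<in>space M. bpi \<xi> \<eta> n \<omega> = k \<and> \<bar>(\<Sum>i=1..k. real (\<xi> (Suc n) i \<omega>)) - alpha * real k\<bar> > t}
   = prob {\<omega>\<in>space M. bpi \<xi> \<eta> n \<omega> = k} * prob {\<omega>\<in>space M. \<bar>(\<Sum>i=1..k. real (\<xi> (Suc n) i \<omega>)) - alpha * real k\<bar> > t}"
proof -
  let ?B = "{..< alpha * real k - t} \<union> {alpha * real k + t <..}"
  have eq: "\<bar>z - alpha * real k\<bar> > t \<longleftrightarrow> z \<in> ?B" for z by auto
  have "prob {\<omega>\<in>space M. real (bpi \<xi> \<eta> n \<omega>) \<in> {real k} \<and> (\<Sum>i=1..k. real (\<xi> (Suc n) i \<omega>)) \<in> ?B}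
     = prob {\<omega>\<in>space M. real (bpi \<xi> \<eta> n \<omega>) \<in> {real k}} * prob {\<omega>\<in>space M. (\<Sum>i=1..k. real (\<xi> (Suc n) i \<omega>)) \<in> ?B}"
    by (rule indep_prob[OF indep_N_Z]) auto
  then show ?thesis unfolding eq by simp
qed

end

context bpi_ctx begin

lemma RL_nonneg: "RL (\<lambda>x. prob (S x)) a \<Longrightarrow> a \<ge> 0"
  unfolding RL_def
  by (rule tendsto_lowerbound) (auto intro!: always_eventually divide_nonneg_nonneg T_nonneg)

lemma LLN_bound:
  assumes RN: "RL (\<lambda>x. prob {\<omega>\<in>space M. real (bpi \<xi> \<eta> n \<omega>) > x}) aN"
    and e: "\<epsilon> > 0"
    and C: "\<And>y. y \<ge> y0 \<Longrightarrow> (\<Sum>m\<in>{0..nat \<lfloor>y\<rfloor>}. prob {\<omega>\<in>space M. bpi \<xi> \<eta> n \<omega> = m} * real m powr p) \<le> C * y powr p * T y"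
    and Kd: "0 < \<delta>" "\<delta> \<le> K" "alpha * \<delta> \<le> \<epsilon>"
    and M0: "\<And>m. m \<ge> M0 \<Longrightarrow> prob {\<omega>\<in>space M. \<bar>(\<Sum>i=1..m. real (\<xi> (Suc n) i \<omega>)) - alpha * real m\<bar> > (\<epsilon>/K) * real m} \<le> e'"
    and x: "x > 0" "\<delta> * x \<ge> y0" "\<delta> * x \<ge> real M0"
  shows "prob {\<omega>\<in>space M. \<bar>real (\<Sum>i=1..bpi \<xi> \<eta> n \<omega>. \<xi> (Suc n) i \<omega>) - alpha * real (bpi \<xi> \<eta> n \<omega>)\<bar> > \<epsilon> * x}
     \<le> prob {\<omega>\<in>space M. real (bpi \<xi> \<eta> n \<omega>) > K * x}
       + Emom * C * (\<delta> / \<epsilon>) powr p * T (\<delta> * x) + e' * prob {\<omega>\<in>space M. real (bpi \<xi> \<eta> n \<omega>) > \<delta> * x}"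
proof -
  let ?N = "\<lambda>\<omega>. bpi \<xi> \<eta> n \<omega>"
  let ?Z = "\<lambda>k \<omega>. \<Sum>i=1..k. real (\<xi> (Suc n) i \<omega>)"
  let ?q = "\<lambda>k. prob {\<omega>\<in>space M. \<bar>?Z k \<omega> - alpha * real k\<bar> > \<epsilon> * x}"
  let ?pk = "\<lambda>k. prob {\<omega>\<in>space M. ?N \<omega> = k}"
  define S1 where "S1 = {0..nat \<lfloor>\<delta> * x\<rfloor>}"
  define S2 where "S2 = {nat \<lfloor>\<delta> * x\<rfloor><..nat \<lfloor>K * x\<rfloor>}"
  have K: "K > 0" using Kd by simp
  have sub: "{\<omega>\<in>space M. \<bar>real (\<Sum>i=1..?N \<omega>. \<xi> (Suc n) i \<omega>) - alpha * real (?N \<omega>)\<bar> > \<epsilon> * x}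
     \<subseteq> {\<omega>\<in>space M. real (?N \<omega>) > K * x} \<union> (\<Union>k\<in>{0..nat \<lfloor>K * x\<rfloor>}. {\<omega>\<in>space M. ?N \<omega> = k \<and> \<bar>?Z k \<omega> - alpha * real k\<bar> > \<epsilon> * x})"
  proof safe
    fix \<omega> assume \<omega>: "\<omega> \<in> space M" "\<bar>real (\<Sum>i=1..?N \<omega>. \<xi> (Suc n) i \<omega>) - alpha * real (?N \<omega>)\<bar> > \<epsilon> * x"
      and nb: "\<omega> \<notin> (\<Union>k\<in>{0..nat \<lfloor>K * x\<rfloor>}. {\<omega>\<in>space M. ?N \<omega> = k \<and> \<bar>?Z k \<omega> - alpha * real k\<bar> > \<epsilon> * x})"
    show "real (?N \<omega>) > K * x"
    proof (rule ccontr)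
      assume "\<not> real (?N \<omega>) > K * x"
      then have "?N \<omega> \<le> nat \<lfloor>K * x\<rfloor>" by (simp add: le_nat_floor)
      then show False using nb \<omega> by (auto simp: of_nat_sum)
    qed
  qed
  have "prob {\<omega>\<in>space M. \<bar>real (\<Sum>i=1..?N \<omega>. \<xi> (Suc n) i \<omega>) - alpha * real (?N \<omega>)\<bar> > \<epsilon> * x}
     \<le> prob {\<omega>\<in>space M. real (?N \<omega>) > K * x} + prob (\<Union>k\<in>{0..nat \<lfloor>K * x\<rfloor>}. {\<omega>\<in>space M. ?N \<omega> = k \<and> \<bar>?Z k \<omega> - alpha * real k\<bar> > \<epsilon> * x})"
    by (rule prob_le_2[OF sub]) auto
  also have "prob (\<Union>k\<in>{0..nat \<lfloor>K * x\<rfloor>}. {\<omega>\<in>space M. ?N \<omega> = k \<and> \<bar>?Z k \<omega> - alpha * real k\<bar> > \<epsilon> * x})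
      \<le> (\<Sum>k\<in>{0..nat \<lfloor>K * x\<rfloor>}. prob {\<omega>\<in>space M. ?N \<omega> = k \<and> \<bar>?Z k \<omega> - alpha * real k\<bar> > \<epsilon> * x})"
    by (rule measure_UNION_le) auto
  also have "\<dots> = (\<Sum>k\<in>{0..nat \<lfloor>K * x\<rfloor>}. ?pk k * ?q k)"
    by (rule sum.cong[OF refl]) (rule prob_N_Z)
  also have "{0..nat \<lfloor>K * x\<rfloor>} = S1 \<union> S2"
  proof -
    have "\<lfloor>\<delta> * x\<rfloor> \<le> \<lfloor>K * x\<rfloor>" using Kd x by (intro floor_mono mult_right_mono) auto
    then have "nat \<lfloor>\<delta> * x\<rfloor> \<le> nat \<lfloor>K * x\<rfloor>" by (rule nat_mono)
    then show ?thesis by (auto simp: S1_def S2_def)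
  qed
  also have "(\<Sum>k\<in>S1 \<union> S2. ?pk k * ?q k) = (\<Sum>k\<in>S1. ?pk k * ?q k) + (\<Sum>k\<in>S2. ?pk k * ?q k)"
    by (rule sum.union_disjoint) (auto simp: S1_def S2_def)
  also have "(\<Sum>k\<in>S1. ?pk k * ?q k) \<le> Emom * C * (\<delta> / \<epsilon>) powr p * T (\<delta> * x)"
  proof -
    have "(\<Sum>k\<in>S1. ?pk k * ?q k) \<le> (\<Sum>k\<in>S1. ?pk k * (real k powr p * Emom / (\<epsilon> * x) powr p))"
    proof (intro sum_mono mult_left_mono)
      fix k assume k: "k \<in> S1"
      then have "real k \<le> \<delta> * x" using x Kd by (auto simp: S1_def le_nat_iff le_floor_iff)
      then have "alpha * real k \<le> alpha * (\<delta> * x)" using alpha_nonneg by (rule mult_left_mono)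
      also have "\<dots> = (alpha * \<delta>) * x" by simp
      also have "\<dots> \<le> \<epsilon> * x" using Kd x by (intro mult_right_mono) auto
      finally have ak: "alpha * real k \<le> \<epsilon> * x" .
      have "?q k \<le> prob {\<omega>\<in>space M. ?Z k \<omega> > \<epsilon> * x}"
      proof (rule finite_measure_mono)
        show "{\<omega>\<in>space M. \<bar>?Z k \<omega> - alpha * real k\<bar> > \<epsilon> * x} \<subseteq> {\<omega>\<in>space M. ?Z k \<omega> > \<epsilon> * x}"
        proof safe
          fix \<omega> assume "\<bar>?Z k \<omega> - alpha * real k\<bar> > \<epsilon> * x"
          moreover have "?Z k \<omega> \<ge> 0" by (intro sum_nonneg) auto
          moreover have "alpha * real k \<ge> 0" using alpha_nonneg by simp
          moreover have aux: "\<bar>z - a\<bar> > t \<Longrightarrow> z \<ge> 0 \<Longrightarrow> a \<ge> 0 \<Longrightarrow> a \<le> t \<Longrightarrow> z > t" for z a t :: real by arith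
          ultimately show "?Z k \<omega> > \<epsilon> * x" using ak by blast
        qed
      qed auto
      also have "\<dots> \<le> real k powr p * Emom / (\<epsilon> * x) powr p"
        using e x by (intro Z_moment) auto
      finally show "?q k \<le> real k powr p * Emom / (\<epsilon> * x) powr p" .
    qed auto
    also have "\<dots> = Emom / (\<epsilon> * x) powr p * (\<Sum>k\<in>S1. ?pk k * real k powr p)"
      by (simp add: sum_distrib_left mult_ac)
    also have "\<dots> \<le> Emom / (\<epsilon> * x) powr p * (C * (\<delta> * x) powr p * T (\<delta> * x))"
      unfolding S1_def using C[OF x(2)] Emom_nonneg by (intro mult_left_mono) auto
    also have "\<dots> = Emom * C * (\<delta> / \<epsilon>) powr p * T (\<delta> * x)"
      using e x Kd by (simp add: powr_mult powr_divide field_simps)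
    finally show ?thesis .
  qed
  also have "(\<Sum>k\<in>S2. ?pk k * ?q k) \<le> e' * prob {\<omega>\<in>space M. real (?N \<omega>) > \<delta> * x}"
  proof -
    have "(\<Sum>k\<in>S2. ?pk k * ?q k) \<le> (\<Sum>k\<in>S2. ?pk k * e')"
    proof (intro sum_mono mult_left_mono)
      fix k assume k: "k \<in> S2"
      then have k1: "real k > \<delta> * x" "real k \<le> K * x" using x Kd
        by (auto simp: S2_def le_nat_iff le_floor_iff nat_less_iff floor_less_iff)
      have "?q k \<le> prob {\<omega>\<in>space M. \<bar>?Z k \<omega> - alpha * real k\<bar> > (\<epsilon>/K) * real k}"
      proof (rule finite_measure_mono)
        have "(\<epsilon>/K) * real k \<le> (\<epsilon>/K) * (K * x)" using k1 e K by (intro mult_left_mono) auto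
        also have "\<dots> = \<epsilon> * x" using K by simp
        finally show "{\<omega>\<in>space M. \<bar>?Z k \<omega> - alpha * real k\<bar> > \<epsilon> * x} \<subseteq> {\<omega>\<in>space M. \<bar>?Z k \<omega> - alpha * real k\<bar> > (\<epsilon>/K) * real k}"
          by auto
      qed auto
      also have "\<dots> \<le> e'" using M0 k1 x by (intro M0) linarith
      finally show "?q k \<le> e'" .
    qed auto
    also have "\<dots> = e' * prob {\<omega>\<in>space M. ?N \<omega> \<in> S2}"
    proof -
      have "(\<Sum>k\<in>S2. ?pk k * e') = (\<Sum>k\<in>S2. ?pk k) * e'" by (rule sum_distrib_right[symmetric])
      also have "\<dots> = prob {\<omega>\<in>space M. ?N \<omega> \<in> S2} * e'"
        using sum_prob[OF X_meas[of n], of S2] by (simp add: S2_def)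
      finally show ?thesis by (simp only: mult.commute)
    qed
    also have "\<dots> \<le> e' * prob {\<omega>\<in>space M. real (?N \<omega>) > \<delta> * x}"
    proof (intro mult_left_mono finite_measure_mono)
      show "{\<omega>\<in>space M. ?N \<omega> \<in> S2} \<subseteq> {\<omega>\<in>space M. real (?N \<omega>) > \<delta> * x}"
        using x Kd by (auto simp: S2_def nat_less_iff floor_less_iff)
      show "e' \<ge> 0" using M0[of M0] measure_nonneg[of M "{\<omega> \<in> space M. \<epsilon> / K * real M0 < \<bar>(\<Sum>i = 1..M0. real (\<xi> (Suc n) i \<omega>)) - alpha * real M0\<bar>}"] by linarith
    qed auto
    finally show ?thesis .
  qed
  finally show ?thesis by simp
qed

end

context bpi_ctx begin

lemma LLN_perturb:
  assumes RN: "RL (\<lambda>x. prob {\<omega>\<in>space M. real (bpi \<xi> \<eta> n \<omega>) > x}) aN"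
    and e: "\<epsilon> > 0"
  shows "RL (\<lambda>x. prob {\<omega>\<in>space M. \<bar>real (\<Sum>i=1..bpi \<xi> \<eta> n \<omega>. \<xi> (Suc n) i \<omega>) - alpha * real (bpi \<xi> \<eta> n \<omega>)\<bar> > \<epsilon> * x}) 0"
proof -
  obtain C y0 where y0: "y0 > 0" and C: "\<And>y. y \<ge> y0 \<Longrightarrow> (\<Sum>m\<in>{0..nat \<lfloor>y\<rfloor>}. prob {\<omega>\<in>space M. bpi \<xi> \<eta> n \<omega> = m} * real m powr p) \<le> C * y powr p * T y"
    using moment_bound[OF X_meas RN] by blast
  have aN: "aN \<ge> 0" using RN by (rule RL_nonneg)
  let ?E = "\<lambda>x. prob {\<omega>\<in>space M. \<bar>real (\<Sum>i=1..bpi \<xi> \<eta> n \<omega>. \<xi> (Suc n) i \<omega>) - alpha * real (bpi \<xi> \<eta> n \<omega>)\<bar> > \<epsilon> * x}"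
  let ?PN = "\<lambda>x. prob {\<omega>\<in>space M. real (bpi \<xi> \<eta> n \<omega>) > x}"
  show ?thesis unfolding RL_def
  proof (rule tendstoI)
    fix e0 :: real assume e0: "e0 > 0"
    have "((\<lambda>K. aN * K powr -\<kappa>) \<longlongrightarrow> aN * 0) at_top"
      using kappa_pos by (intro tendsto_mult tendsto_const tendsto_neg_powr filterlim_ident) auto
    then have "eventually (\<lambda>K. aN * K powr -\<kappa> < e0/3) at_top" using e0 by (intro order_tendstoD(2)) auto
    then obtain K where K: "aN * K powr -\<kappa> < e0/3" "K \<ge> 1"
      using eventually_ge_at_top[of "1::real"] by (metis (mono_tags, lifting) eventually_at_top_linorder nle_le order.trans)
    have "((\<lambda>\<delta>. Emom * C * \<delta> powr (p - \<kappa>) / \<epsilon> powr p) \<longlongrightarrow> Emom * C * 0 / \<epsilon> powr p) (at_right 0)"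
    proof (intro tendsto_divide tendsto_mult tendsto_const)
      show "((\<lambda>\<delta>::real. \<delta> powr (p - \<kappa>)) \<longlongrightarrow> 0) (at_right 0)"
        using pk by (intro tendsto_zero_powrI[of "\<lambda>\<delta>. \<delta>" _ "\<lambda>_. p - \<kappa>"]) (auto intro: tendsto_ident_at eventually_at_rightI[of 0 1])
    qed (use e in auto)
    then have ev: "eventually (\<lambda>\<delta>. Emom * C * \<delta> powr (p - \<kappa>) / \<epsilon> powr p < e0/3) (at_right 0)"
      using e0 by (intro order_tendstoD(2)) auto
    have ev2: "eventually (\<lambda>\<delta>::real. \<delta> < min K (\<epsilon> / (alpha + 1))) (at_right 0)"
    proof -
      have "alpha + 1 > 0" using alpha_nonneg by linarith
      then have "\<epsilon> / (alpha + 1) > 0" by (rule divide_pos_pos[OF e])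
      then show ?thesis using K unfolding eventually_at_right_field by (intro exI[of _ "min K (\<epsilon> / (alpha + 1))"]) auto
    qed
    from eventually_conj[OF ev ev2] obtain b where b: "b > 0" "\<And>\<delta>. \<delta> > 0 \<Longrightarrow> \<delta> < b \<Longrightarrow> Emom * C * \<delta> powr (p - \<kappa>) / \<epsilon> powr p < e0/3 \<and> \<delta> < min K (\<epsilon> / (alpha + 1))"
      unfolding eventually_at_right_field by auto
    define \<delta> where "\<delta> = b/2"
    have d: "\<delta> > 0" "Emom * C * \<delta> powr (p - \<kappa>) / \<epsilon> powr p < e0/3" "\<delta> < K" "\<delta> < \<epsilon> / (alpha + 1)"
      using b(1) b(2)[of \<delta>] by (auto simp: \<delta>_def)
    have ad: "alpha * \<delta> \<le> \<epsilon>"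
    proof -
      have "alpha * \<delta> \<le> (alpha + 1) * \<delta>" using d by simp
      also have "\<dots> < \<epsilon>"
      proof -
        have ap: "alpha + 1 > 0" using alpha_nonneg by linarith
        have "\<delta> * (alpha + 1) < \<epsilon> / (alpha + 1) * (alpha + 1)" using d(4) ap by (rule mult_strict_right_mono)
        then show ?thesis using ap by (simp add: mult.commute)
      qed
      finally show ?thesis by simp
    qed
    define e' where "e' = e0 / (3 * (aN * \<delta> powr -\<kappa> + 1))"
    have den: "aN * \<delta> powr -\<kappa> + 1 > 0" using aN d by (simp add: add_nonneg_pos)
    have e': "e' > 0" "e' * (aN * \<delta> powr -\<kappa>) < e0/3"
      using e0 den by (auto simp: e'_def field_simps)
    obtain M0 where M0: "\<And>m. m \<ge> M0 \<Longrightarrow> prob {\<omega>\<in>space M. \<bar>(\<Sum>i=1..m. real (\<xi> (Suc n) i \<omega>)) - alpha * real m\<bar> > (\<epsilon>/K) * real m} \<le> e'"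
      using wlln[of "Suc n" "\<epsilon>/K" e'] e K e' by auto
    have l1: "((\<lambda>x. ?PN (K * x) / T x) \<longlongrightarrow> aN * K powr -\<kappa>) at_top"
      using K by (intro RL_scale RN) auto
    have l2: "((\<lambda>x. Emom * C * (\<delta> / \<epsilon>) powr p * (T (\<delta> * x) / T x)) \<longlongrightarrow> Emom * C * (\<delta> / \<epsilon>) powr p * \<delta> powr -\<kappa>) at_top"
      using d by (intro tendsto_mult tendsto_const T_rv) auto
    have l3: "((\<lambda>x. e' * (?PN (\<delta> * x) / T x)) \<longlongrightarrow> e' * (aN * \<delta> powr -\<kappa>)) at_top"
      using d by (intro tendsto_mult tendsto_const RL_scale RN) auto
    have eqd: "Emom * C * (\<delta> / \<epsilon>) powr p * \<delta> powr -\<kappa> = Emom * C * \<delta> powr (p - \<kappa>) / \<epsilon> powr p"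
      using d e by (simp add: powr_divide powr_diff powr_minus field_simps)
    have "eventually (\<lambda>x. ?PN (K * x) / T x < e0/3 \<and> Emom * C * (\<delta> / \<epsilon>) powr p * (T (\<delta> * x) / T x) < e0/3
        \<and> e' * (?PN (\<delta> * x) / T x) < e0/3 \<and> T x > 0 \<and> x \<ge> max 1 (max (y0/\<delta>) (real M0/\<delta>))) at_top"
      using order_tendstoD(2)[OF l1 K(1)] order_tendstoD(2)[OF l2 d(2)[folded eqd]] order_tendstoD(2)[OF l3 e'(2)]
        T_pos eventually_ge_at_top[of "max 1 (max (y0/\<delta>) (real M0/\<delta>))"]
      by (auto simp: eventually_conj_iff)
    then show "eventually (\<lambda>x. dist (?E x / T x) 0 < e0) at_top"
    proof eventually_elim
      case (elim x)
      have x: "x > 0" "\<delta> * x \<ge> y0" "\<delta> * x \<ge> real M0"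
        using elim d(1) by (auto simp: field_simps)
      have "?E x \<le> ?PN (K * x) + Emom * C * (\<delta> / \<epsilon>) powr p * T (\<delta> * x) + e' * ?PN (\<delta> * x)"
        by (rule LLN_bound[OF RN e C d(1) _ ad M0 x]) (use d in auto)
      then have "?E x / T x \<le> (?PN (K * x) + Emom * C * (\<delta> / \<epsilon>) powr p * T (\<delta> * x) + e' * ?PN (\<delta> * x)) / T x"
        using elim by (intro divide_right_mono) auto
      also have "\<dots> = ?PN (K * x) / T x + Emom * C * (\<delta> / \<epsilon>) powr p * (T (\<delta> * x) / T x) + e' * (?PN (\<delta> * x) / T x)"
        by (simp add: add_divide_distrib)
      also have "\<dots> < e0" using elim by linarith
      finally have "?E x / T x < e0" .
      moreover have "?E x / T x \<ge> 0" using T_nonneg by (intro divide_nonneg_nonneg) auto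
      ultimately show ?case by simp
    qed
  qed
qed

end

context bpi_ctx begin

lemma RL_zero: "(\<And>x. x \<ge> 0 \<Longrightarrow> f x = 0) \<Longrightarrow> RL f 0"
  unfolding RL_def
  by (rule Lim_transform_eventually[OF tendsto_const]) (auto intro: eventually_mono[OF eventually_ge_at_top[of 0]])

lemma Zsum_meas[measurable]: "(\<lambda>\<omega>. \<Sum>i=1..bpi \<xi> \<eta> n \<omega>. \<xi> (Suc n) i \<omega>) \<in> measurable M (count_space UNIV)"
proof -
  have "(\<lambda>\<omega>. (\<lambda>k \<omega>. \<Sum>i=1..k. \<xi> (Suc n) i \<omega>) (bpi \<xi> \<eta> n \<omega>) \<omega>) \<in> measurable M (count_space UNIV)"
  proof (rule measurable_compose_countable[OF _ X_meas])
    fix k show "(\<lambda>\<omega>. \<Sum>i=1..k. \<xi> (Suc n) i \<omega>) \<in> measurable M (count_space UNIV)"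
      by (intro measurable_sum_nat meas_xi) auto
  qed
  then show ?thesis by simp
qed

lemma indep_V_eta:
  shows "indep_var borel (\<lambda>\<omega>. \<Sum>j=1..n. v j * real (bpi \<xi> \<eta> j \<omega>)) borel (\<lambda>\<omega>. c * real (\<eta> (Suc n) \<omega>))"
proof -
  define B :: "(nat \<times> nat + nat) set" where "B = {Inr (Suc n)}"
  have AB: "Aset n \<inter> B = {}" "B \<subseteq> Jset" by (auto simp: B_def Aset_def Jset_def)
  have gm: "Gf j \<in> measurable (PiM (Aset n) (\<lambda>_. count_space UNIV)) (count_space UNIV)" if "j \<in> {1..n}" for j
    using that by (intro Gf_meas Aset_mono) auto
  have f: "(\<lambda>h. \<Sum>j=1..n. v j * real (Gf j h)) \<in> borel_measurable (PiM (Aset n) (\<lambda>_. count_space UNIV))"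
    using gm by measurable
  have g: "(\<lambda>h. c * real (h (Inr (Suc n)))) \<in> borel_measurable (PiM B (\<lambda>_. count_space UNIV))"
    using measurable_component_singleton[of "Inr (Suc n)" B "\<lambda>_. count_space UNIV"] by (simp add: B_def) measurable
  have "indep_var borel (\<lambda>\<omega>. \<Sum>j=1..n. v j * real (Gf j (restrict (\<lambda>j. Xall \<xi> \<eta> j \<omega>) (Aset n)))) borel
      (\<lambda>\<omega>. c * real (restrict (\<lambda>j. Xall \<xi> \<eta> j \<omega>) B (Inr (Suc n))))"
    by (rule indep_funs[OF AB(1) Aset_J AB(2) f g])
  moreover have "(\<lambda>\<omega>. \<Sum>j=1..n. v j * real (Gf j (restrict (\<lambda>j. Xall \<xi> \<eta> j \<omega>) (Aset n)))) = (\<lambda>\<omega>. \<Sum>j=1..n. v j * real (bpi \<xi> \<eta> j \<omega>))"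
    by (auto intro!: sum.cong simp: bpi_Gf Gf_restrict Aset_mono)
  moreover have "(\<lambda>\<omega>. c * real (restrict (\<lambda>j. Xall \<xi> \<eta> j \<omega>) B (Inr (Suc n)))) = (\<lambda>\<omega>. c * real (\<eta> (Suc n) \<omega>))"
    by (auto simp: B_def Xall_def)
  ultimately show ?thesis by simp
qed

lemma main_RL:
  "\<forall>w. (\<forall>j. w j \<ge> 0) \<longrightarrow> RL (\<lambda>x. prob {\<omega>\<in>space M. (\<Sum>j=1..n. w j * real (bpi \<xi> \<eta> j \<omega>)) > x})
      (\<Sum>k=1..n. (\<Sum>j=k..n. w j * alpha ^ (j - k)) powr \<kappa>)"
proof (induction n)
  case 0
  show ?case by (auto intro!: RL_zero)
next
  case (Suc n)
  show ?case
  proof (intro allI impI)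
    fix w :: "nat \<Rightarrow> real" assume w: "\<forall>j. w j \<ge> 0"
    define c where "c = w (Suc n)"
    define w' where "w' = w(n := w n + alpha * c)"
    have c: "c \<ge> 0" using w by (simp add: c_def)
    have w': "\<forall>j. w' j \<ge> 0" using w c alpha_nonneg by (auto simp: w'_def)
    define V where "V \<omega> = (\<Sum>j=1..n. w' j * real (bpi \<xi> \<eta> j \<omega>))" for \<omega>
    define W where "W \<omega> = c * real (\<eta> (Suc n) \<omega>)" for \<omega>
    define E where "E \<omega> = c * (real (\<Sum>i=1..bpi \<xi> \<eta> n \<omega>. \<xi> (Suc n) i \<omega>) - alpha * real (bpi \<xi> \<eta> n \<omega>))" for \<omega>
    define a' where "a' = (\<Sum>k=1..n. (\<Sum>j=k..n. w' j * alpha ^ (j - k)) powr \<kappa>)"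
    have mV[measurable]: "V \<in> borel_measurable M" unfolding V_def by measurable
    have mW[measurable]: "W \<in> borel_measurable M" unfolding W_def using meas_eta[of "Suc n"] by measurable
    have mE[measurable]: "E \<in> borel_measurable M" unfolding E_def by measurable
    have RV: "RL (\<lambda>x. prob {\<omega>\<in>space M. V \<omega> > x}) a'"
      using Suc.IH w' unfolding V_def a'_def by blast
    have RW: "RL (\<lambda>x. prob {\<omega>\<in>space M. W \<omega> > x}) (c powr \<kappa>)"
      unfolding W_def using c by (intro RL_eta) auto
    have ind: "indep_var borel V borel W" unfolding V_def W_def by (rule indep_V_eta)
    have RVW: "RL (\<lambda>x. prob {\<omega>\<in>space M. V \<omega> + W \<omega> > x}) (a' + c powr \<kappa>)"
      by (rule RL_indep_sum[OF mV mW ind _ _ RV RW]) (use w' c in \<open>auto simp: V_def W_def intro!: sum_nonneg\<close>)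
    obtain aN where RN: "RL (\<lambda>x. prob {\<omega>\<in>space M. real (bpi \<xi> \<eta> n \<omega>) > x}) aN"
    proof (cases "n = 0")
      case True
      have "RL (\<lambda>x. prob {\<omega>\<in>space M. real (bpi \<xi> \<eta> n \<omega>) > x}) 0"
        by (rule RL_zero) (simp add: True)
      then show ?thesis by (rule that)
    next
      case False
      have "RL (\<lambda>x. prob {\<omega>\<in>space M. (\<Sum>j=1..n. (if j = n then 1 else 0) * real (bpi \<xi> \<eta> j \<omega>)) > x})
          (\<Sum>k=1..n. (\<Sum>j=k..n. (if j = n then 1 else 0) * alpha ^ (j - k)) powr \<kappa>)"
        using Suc.IH by auto
      moreover have "(\<Sum>j=1..n. (if j = n then 1 else 0) * real (bpi \<xi> \<eta> j \<omega>)) = real (bpi \<xi> \<eta> n \<omega>)" for \<omega>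
      proof -
        have "(\<Sum>j=1..n. (if j = n then 1 else 0) * real (bpi \<xi> \<eta> j \<omega>)) = (\<Sum>j=1..n. if j = n then real (bpi \<xi> \<eta> j \<omega>) else 0)"
          by (intro sum.cong) auto
        also have "\<dots> = real (bpi \<xi> \<eta> n \<omega>)" using False by (simp add: sum.delta')
        finally show ?thesis .
      qed
      ultimately show ?thesis using that by simp
    qed
    have RE: "RL (\<lambda>x. prob {\<omega>\<in>space M. \<bar>E \<omega>\<bar> > \<epsilon> * x}) 0" if e: "\<epsilon> > 0" for \<epsilon>
    proof (cases "c = 0")
      case True
      show ?thesis
      proof (rule RL_zero)
        fix x :: real assume "x \<ge> 0"
        then have "\<not> \<epsilon> * x < 0" using e by (simp add: not_less)
        then show "prob {\<omega>\<in>space M. \<bar>E \<omega>\<bar> > \<epsilon> * x} = 0" using True by (simp add: E_def)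
      qed
    next
      case False
      then have cp: "c > 0" using c by simp
      have "RL (\<lambda>x. prob {\<omega>\<in>space M. \<bar>real (\<Sum>i=1..bpi \<xi> \<eta> n \<omega>. \<xi> (Suc n) i \<omega>) - alpha * real (bpi \<xi> \<eta> n \<omega>)\<bar> > (\<epsilon> / c) * x}) 0"
        using e cp by (intro LLN_perturb[OF RN]) auto
      moreover have "\<bar>E \<omega>\<bar> > \<epsilon> * x \<longleftrightarrow> \<bar>real (\<Sum>i=1..bpi \<xi> \<eta> n \<omega>. \<xi> (Suc n) i \<omega>) - alpha * real (bpi \<xi> \<eta> n \<omega>)\<bar> > (\<epsilon> / c) * x" for \<omega> x
      proof -
        have aux: "(t < \<bar>c * z\<bar>) = (t / c < \<bar>z\<bar>)" for t z :: real
          using cp by (simp add: abs_mult pos_divide_less_eq mult.commute)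
        show ?thesis unfolding E_def aux by (simp add: mult.commute)
      qed
      ultimately show ?thesis by simp
    qed
    have R: "RL (\<lambda>x. prob {\<omega>\<in>space M. (V \<omega> + W \<omega>) + E \<omega> > x}) (a' + c powr \<kappa>)"
      by (rule RL_perturb[OF _ mE RVW RE]) auto
    have sumeq: "(V \<omega> + W \<omega>) + E \<omega> = (\<Sum>j=1..Suc n. w j * real (bpi \<xi> \<eta> j \<omega>))" for \<omega>
    proof -
      have "V \<omega> = (\<Sum>j=1..n. w j * real (bpi \<xi> \<eta> j \<omega>)) + alpha * c * real (bpi \<xi> \<eta> n \<omega>)"
      proof (cases "n = 0")
        case True then show ?thesis by (simp add: V_def)
      next
        case False
        have "V \<omega> = (\<Sum>j=1..n. w j * real (bpi \<xi> \<eta> j \<omega>) + (if j = n then alpha * c * real (bpi \<xi> \<eta> j \<omega>) else 0))"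
          unfolding V_def w'_def by (intro sum.cong) (auto simp: algebra_simps)
        also have "\<dots> = (\<Sum>j=1..n. w j * real (bpi \<xi> \<eta> j \<omega>)) + alpha * c * real (bpi \<xi> \<eta> n \<omega>)"
          using False by (simp add: sum.distrib sum.delta')
        finally show ?thesis .
      qed
      then show ?thesis unfolding W_def E_def c_def by (simp add: algebra_simps)
    qed
    have aeq: "a' + c powr \<kappa> = (\<Sum>k=1..Suc n. (\<Sum>j=k..Suc n. w j * alpha ^ (j - k)) powr \<kappa>)"
    proof -
      have inner: "(\<Sum>j=k..n. w' j * alpha ^ (j - k)) = (\<Sum>j=k..Suc n. w j * alpha ^ (j - k))" if k: "k \<in> {1..n}" for k
      proof -
        have "(\<Sum>j=k..n. w' j * alpha ^ (j - k)) = (\<Sum>j=k..n. w j * alpha ^ (j - k) + (if j = n then alpha * c * alpha ^ (j - k) else 0))"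
          unfolding w'_def by (intro sum.cong) (auto simp: algebra_simps)
        also have "\<dots> = (\<Sum>j=k..n. w j * alpha ^ (j - k)) + alpha * c * alpha ^ (n - k)"
          using k by (simp add: sum.distrib sum.delta')
        also have "alpha * c * alpha ^ (n - k) = w (Suc n) * alpha ^ (Suc n - k)"
          using k by (simp add: c_def Suc_diff_le)
        also have "(\<Sum>j=k..n. w j * alpha ^ (j - k)) + w (Suc n) * alpha ^ (Suc n - k) = (\<Sum>j=k..Suc n. w j * alpha ^ (j - k))"
          using k by simp
        finally show ?thesis .
      qed
      have "(\<Sum>k=1..Suc n. (\<Sum>j=k..Suc n. w j * alpha ^ (j - k)) powr \<kappa>)
          = (\<Sum>k=1..n. (\<Sum>j=k..Suc n. w j * alpha ^ (j - k)) powr \<kappa>) + c powr \<kappa>"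
        by (simp add: c_def)
      also have "(\<Sum>k=1..n. (\<Sum>j=k..Suc n. w j * alpha ^ (j - k)) powr \<kappa>) = a'"
        unfolding a'_def using inner by (intro sum.cong) auto
      finally show ?thesis by simp
    qed
    show "RL (\<lambda>x. prob {\<omega>\<in>space M. (\<Sum>j=1..Suc n. w j * real (bpi \<xi> \<eta> j \<omega>)) > x})
      (\<Sum>k=1..Suc n. (\<Sum>j=k..Suc n. w j * alpha ^ (j - k)) powr \<kappa>)"
      using R unfolding sumeq aeq .
  qed
qed

end


lemma inner_sum_eq:
  fixes a :: real
  assumes "k \<le> n"
  shows "(\<Sum>j=k..n. a ^ (j - k)) = (\<Sum>m<Suc n - k. a ^ m)"
  by (rule sum.reindex_bij_witness[where i="\<lambda>m. m + k" and j="\<lambda>j. j - k"]) (use assms in auto)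

lemma target_eq:
  fixes a :: real
  shows "(\<Sum>k=1..n. (\<Sum>j=k..n. 1 * a ^ (j - k)) powr r) = (\<Sum>i=1..n. (\<Sum>m<i. a ^ m) powr r)"
proof -
  have "(\<Sum>k=1..n. (\<Sum>j=k..n. 1 * a ^ (j - k)) powr r) = (\<Sum>k=1..n. (\<Sum>j=(n + 1 - k)..n. 1 * a ^ (j - (n + 1 - k))) powr r)"
    by (subst sum.atLeastAtMost_rev) simp
  also have "\<dots> = (\<Sum>i=1..n. (\<Sum>m<i. a ^ m) powr r)"
  proof (rule sum.cong[OF refl])
    fix i assume i: "i \<in> {1..n}"
    then have "(\<Sum>j=(n + 1 - i)..n. a ^ (j - (n + 1 - i))) = (\<Sum>m<Suc n - (n + 1 - i). a ^ m)"
      by (intro inner_sum_eq) auto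
    also have "Suc n - (n + 1 - i) = i" using i by auto
    finally show "(\<Sum>j=(n + 1 - i)..n. 1 * a ^ (j - (n + 1 - i))) powr r = (\<Sum>m<i. a ^ m) powr r" by simp
  qed
  finally show ?thesis .
qed

theorem proposition4p1:
  fixes M :: "'a measure"
    and \<xi> :: "nat \<Rightarrow> nat \<Rightarrow> 'a \<Rightarrow> nat"
    and \<eta> :: "nat \<Rightarrow> 'a \<Rightarrow> nat"
    and \<kappa> :: real
  assumes "prob_space M"
    and indep: "prob_space.indep_vars M (\<lambda>_. count_space UNIV)
          (\<lambda>j. case j of Inl (n, i) \<Rightarrow> \<xi> n i | Inr n \<Rightarrow> \<eta> n)
          ({Inl (n, i) | n i. n \<ge> 1 \<and> i \<ge> 1} \<union> {Inr n | n. n \<ge> 1})"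
    and xi_id: "\<And>n i. n \<ge> 1 \<Longrightarrow> i \<ge> 1 \<Longrightarrow>
          distr M (count_space UNIV) (\<xi> n i) = distr M (count_space UNIV) (\<xi> 1 1)"
    and eta_id: "\<And>n. n \<ge> 1 \<Longrightarrow>
          distr M (count_space UNIV) (\<eta> n) = distr M (count_space UNIV) (\<eta> 1)"
    and eta_nondeg: "measure M {\<omega> \<in> space M. \<eta> 1 \<omega> = 0} < 1"
    and alpha_pos: "0 < prob_space.expectation M (\<lambda>\<omega>. real (\<xi> 1 1 \<omega>))"
    and alpha_lt1: "prob_space.expectation M (\<lambda>\<omega>. real (\<xi> 1 1 \<omega>)) < 1"
    and kappa_pos: "\<kappa> > 0"
    and tail: "\<exists>L. slowly_varying L \<and>
          (\<forall>x>0. measure M {\<omega> \<in> space M. real (\<eta> 1 \<omega>) > x} = x powr (-\<kappa>) * L x)"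
    and moment: "\<kappa> \<ge> 1 \<Longrightarrow> \<exists>\<delta>>0. integrable M (\<lambda>\<omega>. real (\<xi> 1 1 \<omega>) powr (\<kappa> + \<delta>))"
  shows "\<forall>n\<ge>1.
    ((\<lambda>x. measure M {\<omega> \<in> space M. real (bpi_sum \<xi> \<eta> n \<omega>) > x}
          / measure M {\<omega> \<in> space M. real (\<eta> 1 \<omega>) > x})
     \<longlongrightarrow> (\<Sum>i=1..n. (\<Sum>m<i. (prob_space.expectation M (\<lambda>\<omega>. real (\<xi> 1 1 \<omega>))) ^ m) powr \<kappa>)) at_top"
proof -
  interpret P: prob_space M by fact
  have int_xi: "integrable M (\<lambda>\<omega>. real (\<xi> 1 1 \<omega>))"
  proof (rule ccontr)
    assume "\<not> integrable M (\<lambda>\<omega>. real (\<xi> 1 1 \<omega>))"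
    then have "P.expectation (\<lambda>\<omega>. real (\<xi> 1 1 \<omega>)) = 0" by (rule not_integrable_integral_eq)
    then show False using alpha_pos by simp
  qed
  obtain p where p: "1 \<le> p" "\<kappa> < p" "integrable M (\<lambda>\<omega>. real (\<xi> 1 1 \<omega>) powr p)"
  proof (cases "\<kappa> < 1")
    case True
    have "integrable M (\<lambda>\<omega>. real (\<xi> 1 1 \<omega>) powr 1)" using int_xi by (simp add: powr_one)
    then show ?thesis using True that[of 1] by simp
  next
    case False
    then obtain \<delta> where "\<delta> > 0" "integrable M (\<lambda>\<omega>. real (\<xi> 1 1 \<omega>) powr (\<kappa> + \<delta>))" using moment by auto
    then show ?thesis using False that[of "\<kappa> + \<delta>"] by simp
  qed
  have XJ: "Xall \<xi> \<eta> = (\<lambda>j. case j of Inl (n, i) \<Rightarrow> \<xi> n i | Inr n \<Rightarrow> \<eta> n)"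
    by (auto simp: Xall_def fun_eq_iff)
  have ind': "P.indep_vars (\<lambda>_. count_space UNIV) (Xall \<xi> \<eta>) Jset"
    using indep unfolding XJ Jset_def .
  interpret B: bpi_ctx M \<xi> \<eta> \<kappa> p
    by unfold_locales (fact ind' xi_id eta_id kappa_pos tail p int_xi)+
  show ?thesis
  proof (intro allI impI)
    fix n :: nat assume "n \<ge> 1"
    have "B.RL (\<lambda>x. measure M {\<omega>\<in>space M. (\<Sum>j=1..n. 1 * real (bpi \<xi> \<eta> j \<omega>)) > x})
        (\<Sum>k=1..n. (\<Sum>j=k..n. 1 * B.alpha ^ (j - k)) powr \<kappa>)"
      using B.main_RL[of n, rule_format, of "\<lambda>_. 1"] by simp
    moreover have "(\<Sum>j=1..n. 1 * real (bpi \<xi> \<eta> j \<omega>)) = real (bpi_sum \<xi> \<eta> n \<omega>)" for \<omega>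
      by (simp add: bpi_sum_def)
    ultimately show "((\<lambda>x. measure M {\<omega> \<in> space M. real (bpi_sum \<xi> \<eta> n \<omega>) > x}
          / measure M {\<omega> \<in> space M. real (\<eta> 1 \<omega>) > x})
     \<longlongrightarrow> (\<Sum>i=1..n. (\<Sum>m<i. (prob_space.expectation M (\<lambda>\<omega>. real (\<xi> 1 1 \<omega>))) ^ m) powr \<kappa>)) at_top"
      unfolding B.RL_def B.T_def target_eq by simp
  qed
qed


end
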